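(* Let $p$ be a prime, $g\ge 2$, and $\pi=\langle a_1,b_1,\dots,a_g,b_g\mid \prod_{i=1}^g[a_i,b_i]=1\rangle$. Let $r\in\{1,2\}$ and let $H\subset\pi^{\mathrm{ab}}/p$ be a subgroup of rank $\ge r$. Then there exists a surjective homomorphism $q:\pi\to Q=\mathbb{Z}^{\ast r}$ (the free group of rank $r$) such that the composition $H\subset\pi^{\mathrm{ab}}/p\to Q^{\mathrm{ab}}/p\cong(\mathbb{Z}/p)^r$ is surjective. *)

theory Defs
  imports "HOL-Algebra.Algebra"
begin

text \<open>A letter (i, False) stands for the generator x_i, the letter (i, True) for its inverse.\<close>

fun cons_red :: "'a \<times> bool \<Rightarrow> ('a \<times> bool) list \<Rightarrow> ('a \<times> bool) list" where
  "cons_red x [] = [x]"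
| "cons_red x (y # ys) = (if fst x = fst y \<and> snd x \<noteq> snd y then ys else x # y # ys)"

definition reduce_word :: "('a \<times> bool) list \<Rightarrow> ('a \<times> bool) list" where
  "reduce_word w = foldr cons_red w []"

definition free_grp :: "nat \<Rightarrow> (nat \<times> bool) list monoid" where
  "free_grp n = \<lparr> carrier = {w. (\<forall>l \<in> set w. fst l < n) \<and> reduce_word w = w},
                  monoid.mult = (\<lambda>u v. reduce_word (u @ v)),
                  monoid.one = [] \<rparr>"

text \<open>Generators a_i = x_(2i), b_i = x_(2i+1) for i < g; relator prod_i [a_i, b_i],
  with [a,b] = a b a^-1 b^-1.\<close>
definition surface_relator :: "nat \<Rightarrow> (nat \<times> bool) list" where
  "surface_relator g = reduce_word
     (concat (map (\<lambda>i. [(2*i, False), (2*i+1, False), (2*i, True), (2*i+1, True)]) [0..<g]))"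

definition normal_closure :: "('a, 'b) monoid_scheme \<Rightarrow> 'a set \<Rightarrow> 'a set" where
  "normal_closure G S =
     generate G {inv\<^bsub>G\<^esub> x \<otimes>\<^bsub>G\<^esub> s \<otimes>\<^bsub>G\<^esub> x | x s. x \<in> carrier G \<and> s \<in> S}"

definition surface_group :: "nat \<Rightarrow> (nat \<times> bool) list set monoid" where
  "surface_group g = free_grp (2*g) Mod normal_closure (free_grp (2*g)) {surface_relator g}"

definition ab_modp_sub :: "nat \<Rightarrow> ('a, 'b) monoid_scheme \<Rightarrow> 'a set" where
  "ab_modp_sub p G = generate G (derived_set G (carrier G) \<union> {x [^]\<^bsub>G\<^esub> p | x. x \<in> carrier G})"

definition ab_modp :: "nat \<Rightarrow> ('a, 'b) monoid_scheme \<Rightarrow> 'a set monoid" where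
  "ab_modp p G = G Mod ab_modp_sub p G"

definition subgroup_rank :: "('a, 'b) monoid_scheme \<Rightarrow> 'a set \<Rightarrow> nat" where
  "subgroup_rank G H = (LEAST n. \<exists>S. S \<subseteq> H \<and> finite S \<and> card S = n \<and> generate G S = H)"

end

theory Submission
  imports Defs "HOL-Computational_Algebra.Primes"
begin

fun reduced :: "('a \<times> bool) list \<Rightarrow> bool" where
  "reduced [] = True"
| "reduced [x] = True"
| "reduced (x # y # ys) = (\<not>(fst x = fst y \<and> snd x \<noteq> snd y) \<and> reduced (y # ys))"

definition flip :: "'a \<times> bool \<Rightarrow> 'a \<times> bool" where
  "flip l = (fst l, \<not> snd l)"

definition inv_word :: "('a \<times> bool) list \<Rightarrow> ('a \<times> bool) list" where
  "inv_word w = rev (map flip w)"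

lemma reduced_tl: "reduced (x # xs) \<Longrightarrow> reduced xs"
  by (cases xs) auto

lemma cons_red_reduced: "reduced w \<Longrightarrow> reduced (cons_red x w)"
  by (cases w rule: reduced.cases) (auto dest: reduced_tl)

lemma reduced_reduce_word: "reduced (reduce_word w)"
  unfolding reduce_word_def by (induction w) (auto intro: cons_red_reduced)

lemma foldr_reduced: "reduced w \<Longrightarrow> reduced (foldr cons_red a w)"
  by (induction a) (auto intro: cons_red_reduced)

lemma cons_red_id: "reduced (x # w) \<Longrightarrow> cons_red x w = x # w"
  by (cases w) auto

lemma reduce_word_reduced: "reduced w \<Longrightarrow> reduce_word w = w"
  unfolding reduce_word_def
proof (induction w)
  case (Cons x w)
  then have "foldr cons_red w [] = w" using reduced_tl by blast
  then show ?case using cons_red_id[OF Cons.prems] by simp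
qed simp

lemma reduce_word_eq_iff: "reduce_word w = w \<longleftrightarrow> reduced w"
  using reduced_reduce_word reduce_word_reduced by metis

lemma reduce_append: "reduce_word (a @ b) = foldr cons_red a (reduce_word b)"
  unfolding reduce_word_def by simp

lemma cons_red_flip: "reduced w \<Longrightarrow> cons_red x (cons_red (flip x) w) = w"
  apply (cases w)
   apply (auto simp: flip_def)
  apply (metis cons_red_id prod.collapse)
  by (metis cons_red_id prod.collapse)

lemma cons_red_flip': "reduced w \<Longrightarrow> cons_red (flip x) (cons_red x w) = w"
  using cons_red_flip[of w "flip x"] by (simp add: flip_def)

lemma foldr_cons_red_step:
  assumes "reduced z" "reduced w"
  shows "foldr cons_red (cons_red x z) w = cons_red x (foldr cons_red z w)"
proof (cases z)
  case Nil then show ?thesis by simp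
next
  case (Cons y zs)
  show ?thesis
  proof (cases "fst x = fst y \<and> snd x \<noteq> snd y")
    case True
    then have yx: "y = flip x" by (cases x, cases y) (auto simp: flip_def)
    have "cons_red x z = zs" using Cons True by simp
    moreover have "foldr cons_red z w = cons_red (flip x) (foldr cons_red zs w)" using Cons yx by simp
    ultimately show ?thesis using cons_red_flip[OF foldr_reduced[OF assms(2)], of x zs] by simp
  next
    case False then show ?thesis using Cons by auto
  qed
qed

lemma foldr_reduce: "reduced w \<Longrightarrow> foldr cons_red a w = foldr cons_red (reduce_word a) w"
proof (induction a)
  case Nil then show ?case by (simp add: reduce_word_def)
next
  case (Cons x a)
  have "reduce_word (x # a) = cons_red x (reduce_word a)" by (simp add: reduce_word_def)
  then show ?case using Cons foldr_cons_red_step[OF reduced_reduce_word Cons.prems, of x a] by simp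
qed

lemma reduce_append_right: "reduce_word (a @ b) = reduce_word (a @ reduce_word b)"
  by (simp add: reduce_append reduce_word_reduced reduced_reduce_word)

lemma reduce_append_left: "reduce_word (a @ b) = reduce_word (reduce_word a @ b)"
  unfolding reduce_append by (rule foldr_reduce[OF reduced_reduce_word])

lemma reduce_append_both: "reduce_word (a @ b) = reduce_word (reduce_word a @ reduce_word b)"
  by (metis reduce_append_left reduce_append_right)

lemma reduce_idem[simp]: "reduce_word (reduce_word w) = reduce_word w"
  by (simp add: reduce_word_reduced reduced_reduce_word)

lemma reduced_snoc2: "reduced ((zs @ [a]) @ [b]) = (reduced (zs @ [a]) \<and> \<not>(fst a = fst b \<and> snd a \<noteq> snd b))"
  by (induction zs rule: reduced.induct) auto

lemma reduced_inv_word: "reduced w \<Longrightarrow> reduced (inv_word w)"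
proof (induction w rule: reduced.induct)
  case (3 x y ys)
  have r: "reduced (inv_word (y # ys))" using 3 by simp
  have e: "inv_word (x # y # ys) = (rev (map flip ys) @ [flip y]) @ [flip x]" by (simp add: inv_word_def)
  have r': "reduced (rev (map flip ys) @ [flip y])" using r by (simp add: inv_word_def)
  have nc: "\<not>(fst (flip y) = fst (flip x) \<and> snd (flip y) \<noteq> snd (flip x))" using 3(2) by (auto simp: flip_def)
  show ?case unfolding e using reduced_snoc2 r' nc by blast
qed (auto simp: inv_word_def)

lemma inv_word_inv_word[simp]: "inv_word (inv_word w) = w"
  by (simp add: inv_word_def rev_map comp_def flip_def)

lemma reduce_inv_left: "reduced w \<Longrightarrow> reduce_word (inv_word w @ w) = []"
proof (induction w)
  case Nil then show ?case by (simp add: inv_word_def reduce_word_def)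
next
  case (Cons x w)
  have rw: "reduced w" using Cons.prems reduced_tl by blast
  have "reduce_word (flip x # x # w) = cons_red (flip x) (cons_red x (reduce_word w))"
    by (simp add: reduce_word_def)
  then have e: "reduce_word (flip x # x # w) = w"
    using reduce_word_reduced[OF rw] cons_red_flip'[OF rw] by simp
  have "inv_word (x # w) @ x # w = inv_word w @ (flip x # x # w)" by (simp add: inv_word_def)
  then have "reduce_word (inv_word (x # w) @ x # w) = foldr cons_red (inv_word w) w"
    by (simp only: reduce_append e)
  also have "foldr cons_red (inv_word w) w = reduce_word (inv_word w @ w)"
    using rw by (simp add: reduce_append reduce_word_reduced)
  finally show ?case using Cons.IH rw by simp
qed

lemma reduce_inv_right: "reduced w \<Longrightarrow> reduce_word (w @ inv_word w) = []"
  using reduce_inv_left[of "inv_word w"] reduced_inv_word by fastforce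

lemma set_cons_red: "set (cons_red x w) \<subseteq> insert x (set w)"
  by (cases w) auto

lemma set_reduce_word: "set (reduce_word w) \<subseteq> set w"
  unfolding reduce_word_def
  by (induction w) (auto dest: subsetD[OF set_cons_red])

lemma set_inv_word: "l \<in> set (inv_word w) \<Longrightarrow> fst l \<in> fst ` set w"
  by (force simp: inv_word_def flip_def)

lemma free_grp_group: "group (free_grp n)"
proof (rule groupI)
  fix x y assume "x \<in> carrier (free_grp n)" "y \<in> carrier (free_grp n)"
  moreover have "set (reduce_word (x @ y)) \<subseteq> set x \<union> set y" using set_reduce_word by fastforce
  ultimately show "x \<otimes>\<^bsub>free_grp n\<^esub> y \<in> carrier (free_grp n)"
    by (auto simp: free_grp_def)
next
  show "\<one>\<^bsub>free_grp n\<^esub> \<in> carrier (free_grp n)" by (simp add: free_grp_def reduce_word_def)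
next
  fix x y z
  show "x \<otimes>\<^bsub>free_grp n\<^esub> y \<otimes>\<^bsub>free_grp n\<^esub> z = x \<otimes>\<^bsub>free_grp n\<^esub> (y \<otimes>\<^bsub>free_grp n\<^esub> z)"
    by (simp add: free_grp_def) (metis append_assoc reduce_append_left reduce_append_right)
next
  fix x assume "x \<in> carrier (free_grp n)"
  then show "\<one>\<^bsub>free_grp n\<^esub> \<otimes>\<^bsub>free_grp n\<^esub> x = x" by (simp add: free_grp_def)
next
  fix x assume x: "x \<in> carrier (free_grp n)"
  then have r: "reduced x" by (simp add: free_grp_def reduce_word_eq_iff)
  have "inv_word x \<in> carrier (free_grp n)"
    using x r by (auto simp: free_grp_def reduce_word_eq_iff reduced_inv_word dest!: set_inv_word)
  moreover have "inv_word x \<otimes>\<^bsub>free_grp n\<^esub> x = \<one>\<^bsub>free_grp n\<^esub>"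
    using r by (simp add: free_grp_def reduce_inv_left)
  ultimately show "\<exists>y\<in>carrier (free_grp n). y \<otimes>\<^bsub>free_grp n\<^esub> x = \<one>\<^bsub>free_grp n\<^esub>" by blast
qed

lemma free_grp_inv: "x \<in> carrier (free_grp n) \<Longrightarrow> inv\<^bsub>free_grp n\<^esub> x = inv_word x"
proof -
  assume x: "x \<in> carrier (free_grp n)"
  then have r: "reduced x" by (simp add: free_grp_def reduce_word_eq_iff)
  have c: "inv_word x \<in> carrier (free_grp n)"
    using x r by (auto simp: free_grp_def reduce_word_eq_iff reduced_inv_word dest!: set_inv_word)
  show ?thesis
    using group.inv_equality[OF free_grp_group _ x c] r by (simp add: free_grp_def reduce_inv_left)
qed

lemma free_grp_carrier_iff: "w \<in> carrier (free_grp n) \<longleftrightarrow> (\<forall>l\<in>set w. fst l < n) \<and> reduced w"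
  by (simp add: free_grp_def reduce_word_eq_iff)

lemma free_grp_mult: "x \<otimes>\<^bsub>free_grp n\<^esub> y = reduce_word (x @ y)"
  by (simp add: free_grp_def)

lemma free_grp_one: "\<one>\<^bsub>free_grp n\<^esub> = []"
  by (simp add: free_grp_def)

definition es :: "(nat \<times> bool) list \<Rightarrow> nat \<Rightarrow> int" where
  "es w k = sum_list (map (\<lambda>l. if fst l = k then (if snd l then -1 else 1) else 0) w)"

lemma es_Nil[simp]: "es [] k = 0" by (simp add: es_def)
lemma es_Cons: "es (l # w) k = (if fst l = k then (if snd l then -1 else 1) else 0) + es w k"
  by (simp add: es_def)
lemma es_append[simp]: "es (u @ v) k = es u k + es v k" by (simp add: es_def)

lemma es_cons_red: "es (cons_red x w) k = es (x # w) k"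
  by (cases w) (auto simp: es_Cons)

lemma es_reduce[simp]: "es (reduce_word w) k = es w k"
  unfolding reduce_word_def by (induction w) (auto simp: es_cons_red es_Cons)

lemma es_inv_word[simp]: "es (inv_word w) k = - es w k"
  by (induction w) (auto simp: inv_word_def es_Cons flip_def)

abbreviation F where "F n \<equiv> free_grp n"

lemma es_mult[simp]: "es (x \<otimes>\<^bsub>F n\<^esub> y) k = es x k + es y k"
  by (simp add: free_grp_mult)

lemma es_one[simp]: "es \<one>\<^bsub>F n\<^esub> k = 0"
  by (simp add: free_grp_one)

lemma es_inv[simp]: "x \<in> carrier (F n) \<Longrightarrow> es (inv\<^bsub>F n\<^esub> x) k = - es x k"
  by (simp add: free_grp_inv)

lemma es_nat_pow[simp]: "es (x [^]\<^bsub>F n\<^esub> (m::nat)) k = int m * es x k"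
  by (induction m) (auto simp: algebra_simps)

lemma es_int_pow[simp]: "x \<in> carrier (F n) \<Longrightarrow> es (x [^]\<^bsub>F n\<^esub> (m::int)) k = m * es x k"
proof -
  assume x: "x \<in> carrier (F n)"
  have c: "x [^]\<^bsub>F n\<^esub> (j::nat) \<in> carrier (F n)" for j
    using monoid.nat_pow_closed[OF group.is_monoid[OF free_grp_group] x] .
  show ?thesis
  proof (cases "m < 0")
    case True
    then have "x [^]\<^bsub>F n\<^esub> m = inv\<^bsub>F n\<^esub> (x [^]\<^bsub>F n\<^esub> nat (-m))" by (simp only: int_pow_def2 if_True)
    then show ?thesis using es_inv[OF c[of "nat (-m)"], of k] es_nat_pow[where x=x and n=n and m="nat (-m)" and k=k] True by simp
  next
    case False
    then have "x [^]\<^bsub>F n\<^esub> m = x [^]\<^bsub>F n\<^esub> nat m" by (simp only: int_pow_def2 if_False)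
    then show ?thesis using es_nat_pow[where x=x and n=n and m="nat m" and k=k] False by simp
  qed
qed

definition lw :: "(nat \<Rightarrow> (nat \<times> bool) list) \<Rightarrow> nat \<times> bool \<Rightarrow> (nat \<times> bool) list" where
  "lw f l = (if snd l then inv_word (f (fst l)) else f (fst l))"

definition subst :: "(nat \<Rightarrow> (nat \<times> bool) list) \<Rightarrow> (nat \<times> bool) list \<Rightarrow> (nat \<times> bool) list" where
  "subst f w = reduce_word (concat (map (lw f) w))"

lemma lw_flip_cancel:
  assumes "\<forall>k. reduced (f k)"
  shows "reduce_word (lw f x @ lw f (flip x)) = []"
  using assms reduce_inv_left[of "f (fst x)"] reduce_inv_right[of "f (fst x)"]
  by (auto simp: lw_def flip_def)

lemma subst_cons_red:
  assumes "\<forall>k. reduced (f k)"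
  shows "reduce_word (concat (map (lw f) (cons_red x z))) = reduce_word (lw f x @ concat (map (lw f) z))"
proof (cases z)
  case (Cons y zs)
  show ?thesis
  proof (cases "fst x = fst y \<and> snd x \<noteq> snd y")
    case True
    then have yx: "y = flip x" by (cases x, cases y) (auto simp: flip_def)
    have "reduce_word (lw f x @ concat (map (lw f) z)) = reduce_word ((lw f x @ lw f y) @ concat (map (lw f) zs))"
      using Cons by simp
    also have "\<dots> = reduce_word (concat (map (lw f) zs))"
      by (subst reduce_append_left) (simp add: yx lw_flip_cancel[OF assms])
    finally show ?thesis using Cons True by simp
  next
    case False then show ?thesis using Cons by auto
  qed
qed simp

lemma subst_reduce:
  assumes "\<forall>k. reduced (f k)"
  shows "subst f (reduce_word w) = subst f w"
  unfolding subst_def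
proof (induction w)
  case Nil then show ?case by (simp add: reduce_word_def)
next
  case (Cons x w)
  have "reduce_word (x # w) = cons_red x (reduce_word w)" by (simp add: reduce_word_def)
  then have "reduce_word (concat (map (lw f) (reduce_word (x # w))))
      = reduce_word (lw f x @ concat (map (lw f) (reduce_word w)))"
    using subst_cons_red[OF assms, of x "reduce_word w"] by simp
  also have "\<dots> = reduce_word (lw f x @ reduce_word (concat (map (lw f) (reduce_word w))))"
    by (rule reduce_append_right)
  also have "\<dots> = reduce_word (lw f x @ reduce_word (concat (map (lw f) w)))"
    using Cons by simp
  also have "\<dots> = reduce_word (concat (map (lw f) (x # w)))"
    by (simp flip: reduce_append_right)
  finally show ?case .
qed

lemma subst_carrier:
  assumes "\<forall>k<m. f k \<in> carrier (F n)" "w \<in> carrier (F m)"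
  shows "subst f w \<in> carrier (F n)"
proof -
  have "\<forall>l \<in> set (concat (map (lw f) w)). fst l < n"
  proof
    fix l assume "l \<in> set (concat (map (lw f) w))"
    then obtain x where x: "x \<in> set w" "l \<in> set (lw f x)" by auto
    then have "fst x < m" using assms(2) by (auto simp: free_grp_carrier_iff)
    then have "\<forall>l\<in>set (f (fst x)). fst l < n" using assms(1) by (auto simp: free_grp_carrier_iff)
    then show "fst l < n" using x(2) by (auto simp: lw_def split: if_splits dest!: set_inv_word)
  qed
  then show ?thesis unfolding subst_def free_grp_carrier_iff using set_reduce_word reduced_reduce_word by blast
qed

lemma subst_hom:
  assumes "\<forall>k<m. f k \<in> carrier (F n)" "\<forall>k. reduced (f k)"
  shows "subst f \<in> hom (F m) (F n)"
proof (rule homI)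
  fix x assume "x \<in> carrier (F m)" then show "subst f x \<in> carrier (F n)" using subst_carrier assms by blast
next
  fix x y
  show "subst f (x \<otimes>\<^bsub>F m\<^esub> y) = subst f x \<otimes>\<^bsub>F n\<^esub> subst f y"
    unfolding free_grp_mult subst_reduce[OF assms(2)]
    by (simp add: subst_def flip: reduce_append_both)
qed

lemma es_singleton: "es [l] j = (if fst l = j then (if snd l then -1 else 1) else 0)"
  by (simp add: es_def)

lemma es_lw: "es (lw f l) k = (if snd l then -1 else 1) * es (f (fst l)) k"
  by (simp add: lw_def)

lemma es_subst:
  assumes "\<forall>l\<in>set w. fst l < m"
  shows "es (subst f w) k = (\<Sum>j<m. es w j * es (f j) k)"
  using assms
proof (induction w)
  case Nil then show ?case by (simp add: subst_def)
next
  case (Cons l w)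
  have IH: "es (concat (map (lw f) w)) k = (\<Sum>j<m. es w j * es (f j) k)"
    using Cons by (simp add: subst_def)
  have lm: "fst l < m" using Cons by simp
  have "(\<Sum>j<m. es (l # w) j * es (f j) k) = (\<Sum>j<m. (if fst l = j then (if snd l then -1 else 1) * es (f j) k else 0)) + (\<Sum>j<m. es w j * es (f j) k)"
  proof -
    have "\<And>j. es (l # w) j * es (f j) k = (if fst l = j then (if snd l then -1 else 1) * es (f j) k else 0) + es w j * es (f j) k"
      by (simp add: es_Cons distrib_right)
    then show ?thesis by (simp only: sum.distrib)
  qed
  also have "(\<Sum>j<m. (if fst l = j then (if snd l then -1 else 1) * es (f j) k else 0)) = (if snd l then -1 else 1) * es (f (fst l)) k"
    using lm by (simp add: sum.delta)
  finally show ?case using IH by (simp add: subst_def es_lw)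
qed

definition gen :: "nat \<Rightarrow> (nat \<times> bool) list" where "gen k = [(k, False)]"

lemma gen_carrier: "k < n \<Longrightarrow> gen k \<in> carrier (F n)"
  by (simp add: gen_def free_grp_carrier_iff)

lemma inv_gen: "k < n \<Longrightarrow> inv\<^bsub>F n\<^esub> (gen k) = [(k, True)]"
proof -
  assume "k < n"
  then have "inv\<^bsub>F n\<^esub> (gen k) = inv_word (gen k)" by (rule free_grp_inv[OF gen_carrier])
  then show ?thesis by (simp add: inv_word_def gen_def flip_def)
qed

lemma word_cons_mult: "l # w \<in> carrier (F n) \<Longrightarrow> l # w = [l] \<otimes>\<^bsub>F n\<^esub> w"
  by (simp add: free_grp_mult free_grp_carrier_iff reduce_append cons_red_id reduce_word_reduced reduced_tl)

lemma word_cons_carrier: "l # w \<in> carrier (F n) \<Longrightarrow> w \<in> carrier (F n) \<and> [l] \<in> carrier (F n)"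
  by (auto simp: free_grp_carrier_iff dest: reduced_tl)

lemma letter_cases: "[l] \<in> carrier (F n) \<Longrightarrow> fst l < n \<and> ([l] = gen (fst l) \<or> [l] = inv\<^bsub>F n\<^esub> (gen (fst l)))"
proof -
  assume a: "[l] \<in> carrier (F n)"
  obtain k b where l: "l = (k, b)" by (cases l)
  have k: "k < n" using a l by (simp add: free_grp_carrier_iff)
  show ?thesis
  proof (cases b)
    case True then show ?thesis using inv_gen[OF k] k l by simp
  next
    case False then show ?thesis using k l by (simp add: gen_def)
  qed
qed

lemma carrier_generate: "carrier (F n) \<subseteq> generate (F n) (gen ` {..<n})"
proof
  fix w assume "w \<in> carrier (F n)"
  then show "w \<in> generate (F n) (gen ` {..<n})"
  proof (induction w)
    case Nil then show ?case using generate.one[of "F n"] by (simp add: free_grp_one)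
  next
    case (Cons l w)
    have lc: "fst l < n \<and> ([l] = gen (fst l) \<or> [l] = inv\<^bsub>F n\<^esub> (gen (fst l)))"
      using letter_cases[of l n] word_cons_carrier[OF Cons.prems] by blast
    then have gi: "gen (fst l) \<in> gen ` {..<n}" by blast
    have "[l] \<in> generate (F n) (gen ` {..<n})"
      using lc generate.incl[OF gi] generate.inv[OF gi] by metis
    then show ?case using Cons word_cons_carrier[OF Cons.prems] word_cons_mult[OF Cons.prems]
      by (metis generate.eng)
  qed
qed

lemma (in group) int_pow_cong:
  assumes "x \<in> carrier G" "x [^] (p::nat) = \<one>" "a mod int p = b mod int p"
  shows "x [^] (a::int) = x [^] (b::int)"
proof -
  obtain t where t: "a = b + int p * t"
    using assms(3) by (metis mod_eqE mult.commute add.commute eq_iff_diff_eq_0 diff_add_cancel)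
  have "x [^] (int p * t) = \<one>"
    using assms by (simp add: int_pow_pow[symmetric] int_pow_int)
  then show ?thesis using t assms(1) by (simp add: int_pow_mult)
qed

lemma hom_free_finprod:
  assumes G: "comm_group G" and h: "\<Psi> \<in> hom (F n) G" and w: "w \<in> carrier (F n)"
  shows "\<Psi> w = finprod G (\<lambda>k. \<Psi> (gen k) [^]\<^bsub>G\<^esub> es w k) {..<n}"
  using w
proof (induction w)
  interpret G: comm_group G by (rule G)
  interpret hh: group_hom "F n" G \<Psi>
    using h free_grp_group G.is_group by (simp add: group_hom_def group_hom_axioms_def)
  case Nil
  have "\<Psi> [] = \<one>\<^bsub>G\<^esub>" using hh.hom_one by (simp add: free_grp_one)
  then show ?case by simp
next
  interpret G: comm_group G by (rule G)
  interpret hh: group_hom "F n" G \<Psi>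
    using h free_grp_group G.is_group by (simp add: group_hom_def group_hom_axioms_def)
  case (Cons l w)
  have wc: "w \<in> carrier (F n)" and lc: "[l] \<in> carrier (F n)" using word_cons_carrier[OF Cons.prems] by auto
  have gc: "\<And>k. k < n \<Longrightarrow> \<Psi> (gen k) \<in> carrier G" using gen_carrier by simp
  have "\<Psi> (l # w) = \<Psi> [l] \<otimes>\<^bsub>G\<^esub> \<Psi> w" using word_cons_mult[OF Cons.prems] wc lc by simp
  also have "\<Psi> [l] = \<Psi> (gen (fst l)) [^]\<^bsub>G\<^esub> (if snd l then -1 else 1 :: int)"
    using letter_cases[OF lc] gc[of "fst l"] gen_carrier[of "fst l" n]
    by (cases l) (auto simp: gen_def G.int_pow_neg)
  also have "\<dots> = finprod G (\<lambda>k. if fst l = k then \<Psi> (gen k) [^]\<^bsub>G\<^esub> (if snd l then -1 else 1 :: int) else \<one>\<^bsub>G\<^esub>) {..<n}"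
    using letter_cases[OF lc] gc by (subst G.finprod_singleton) auto
  also have "\<Psi> w = finprod G (\<lambda>k. \<Psi> (gen k) [^]\<^bsub>G\<^esub> es w k) {..<n}" using Cons wc by simp
  finally have "\<Psi> (l # w) = finprod G (\<lambda>k. (if fst l = k then \<Psi> (gen k) [^]\<^bsub>G\<^esub> (if snd l then -1 else 1 :: int) else \<one>\<^bsub>G\<^esub>) \<otimes>\<^bsub>G\<^esub> \<Psi> (gen k) [^]\<^bsub>G\<^esub> es w k) {..<n}"
    using gc by (simp add: Pi_def)
  also have "\<dots> = finprod G (\<lambda>k. \<Psi> (gen k) [^]\<^bsub>G\<^esub> es (l # w) k) {..<n}"
  proof (rule G.finprod_cong')
    show "(\<lambda>k. \<Psi> (gen k) [^]\<^bsub>G\<^esub> es (l # w) k) \<in> {..<n} \<rightarrow> carrier G" using gc by auto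
  next
    fix k assume "k \<in> {..<n}"
    then have k: "\<Psi> (gen k) \<in> carrier G" using gc by auto
    show "(if fst l = k then \<Psi> (gen k) [^]\<^bsub>G\<^esub> (if snd l then -1 else 1 :: int) else \<one>\<^bsub>G\<^esub>) \<otimes>\<^bsub>G\<^esub> \<Psi> (gen k) [^]\<^bsub>G\<^esub> es w k = \<Psi> (gen k) [^]\<^bsub>G\<^esub> es (l # w) k"
      using k by (cases "fst l = k") (simp_all add: es_Cons G.int_pow_mult)
  qed simp
  finally show ?case .
qed

lemma hom_free_cong:
  assumes G: "comm_group G" and h: "\<Psi> \<in> hom (F n) G"
    and pw: "\<forall>k<n. \<Psi> (gen k) [^]\<^bsub>G\<^esub> (p::nat) = \<one>\<^bsub>G\<^esub>"
    and u: "u \<in> carrier (F n)" and v: "v \<in> carrier (F n)"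
    and c: "\<forall>k<n. es u k mod int p = es v k mod int p"
  shows "\<Psi> u = \<Psi> v"
proof -
  interpret G: comm_group G by (rule G)
  have gc: "\<And>k. k < n \<Longrightarrow> \<Psi> (gen k) \<in> carrier G" using gen_carrier h by (auto simp: hom_def)
  show ?thesis
    unfolding hom_free_finprod[OF G h u] hom_free_finprod[OF G h v]
  proof (rule G.finprod_cong')
    show "(\<lambda>k. \<Psi> (gen k) [^]\<^bsub>G\<^esub> es v k) \<in> {..<n} \<rightarrow> carrier G" using gc by auto
  next
    fix k assume "k \<in> {..<n}"
    then show "\<Psi> (gen k) [^]\<^bsub>G\<^esub> es u k = \<Psi> (gen k) [^]\<^bsub>G\<^esub> es v k"
      using gc pw c by (intro G.int_pow_cong) auto
  qed simp
qed

lemma (in group) normal_if_derived: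
  assumes K: "subgroup K G" and D: "derived_set G (carrier G) \<subseteq> K"
  shows "K \<lhd> G"
  unfolding normal_inv_iff
proof (intro conjI K ballI)
  fix x h assume x: "x \<in> carrier G" and h: "h \<in> K"
  have hc: "h \<in> carrier G" using K h subgroup.subset by blast
  have "x \<otimes> h \<otimes> inv x \<otimes> inv h \<in> derived_set G (carrier G)" using x hc by blast
  then have "x \<otimes> h \<otimes> inv x \<otimes> inv h \<in> K" using D by (rule subsetD[rotated])
  then have "x \<otimes> h \<otimes> inv x \<otimes> inv h \<otimes> h \<in> K" using h by (rule subgroup.m_closed[OF K])
  moreover have "x \<otimes> h \<otimes> inv x \<otimes> inv h \<otimes> h = x \<otimes> h \<otimes> inv x" using x hc by (simp add: m_assoc)
  ultimately show "x \<otimes> h \<otimes> inv x \<in> K" by simp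
qed

lemma (in group) ab_sub_subgroup: "subgroup (ab_modp_sub p G) G"
proof -
  have "derived_set G (carrier G) \<subseteq> carrier G" by (rule derived_set_in_carrier) simp
  moreover have "{x [^] p | x. x \<in> carrier G} \<subseteq> carrier G" by auto
  ultimately show ?thesis unfolding ab_modp_sub_def by (intro generate_is_subgroup) blast
qed

lemma (in group) ab_sub_derived: "derived_set G (carrier G) \<subseteq> ab_modp_sub p G"
  unfolding ab_modp_sub_def by (intro subsetI generate.incl UnI1)

lemma (in group) ab_sub_pow: "x \<in> carrier G \<Longrightarrow> x [^] p \<in> ab_modp_sub p G"
  unfolding ab_modp_sub_def by (intro generate.incl UnI2) blast

lemma (in group) ab_sub_normal: "ab_modp_sub p G \<lhd> G"
  by (rule normal_if_derived[OF ab_sub_subgroup ab_sub_derived])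

lemma (in group) ab_comm: "comm_group (G Mod ab_modp_sub p G)"
proof -
  let ?K = "ab_modp_sub p G"
  interpret DG: normal ?K G using ab_sub_normal .
  show ?thesis
  proof (rule group.group_comm_groupI[OF DG.factorgroup_is_group], simp add: FactGroup_def)
    fix H K assume "H \<in> rcosets ?K" and "K \<in> rcosets ?K"
    then obtain g1 g2
      where g1: "g1 \<in> carrier G" "H = ?K #> g1"
        and g2: "g2 \<in> carrier G" "K = ?K #> g2"
      unfolding RCOSETS_def by auto
    hence "H <#> K = ?K #> (g1 \<otimes> g2)"
      by (simp add: DG.rcos_sum)
    also have " ... = ?K #> (g2 \<otimes> g1)"
    proof -
      have "?K #> (g1 \<otimes> g2) \<subseteq> ?K #> (g2 \<otimes> g1)"
        if g1: "g1 \<in> carrier G" and g2: "g2 \<in> carrier G" for g1 g2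
      proof
        fix h assume "h \<in> ?K #> (g1 \<otimes> g2)"
        then obtain g' where h: "g' \<in> carrier G" "g' \<in> ?K" "h = g' \<otimes> (g1 \<otimes> g2)"
          using DG.subset unfolding r_coset_def by auto
        hence "h = g' \<otimes> (g1 \<otimes> g2) \<otimes> (inv g1 \<otimes> inv g2 \<otimes> g2 \<otimes> g1)"
          using g1 g2 by (simp add: m_assoc)
        hence "h = (g' \<otimes> (g1 \<otimes> g2 \<otimes> inv g1 \<otimes> inv g2)) \<otimes> (g2 \<otimes> g1)"
          using h(1) g1 g2 inv_closed m_assoc m_closed by presburger
        moreover have "g1 \<otimes> g2 \<otimes> inv g1 \<otimes> inv g2 \<in> ?K"
          using ab_sub_derived g1 g2 by blast
        hence "g' \<otimes> (g1 \<otimes> g2 \<otimes> inv g1 \<otimes> inv g2) \<in> ?K"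
          using DG.m_closed[OF h(2)] by simp
        ultimately show "h \<in> ?K #> (g2 \<otimes> g1)"
          unfolding r_coset_def by blast
      qed
      thus ?thesis
        using g1(1) g2(1) by auto
    qed
    also have " ... = K <#> H"
      by (simp add: g1 g2 DG.rcos_sum)
    finally show "H <#> K = K <#> H" .
  qed
qed

lemma (in group) ab_pow:
  assumes "XX \<in> carrier (G Mod ab_modp_sub p G)"
  shows "XX [^]\<^bsub>G Mod ab_modp_sub p G\<^esub> p = \<one>\<^bsub>G Mod ab_modp_sub p G\<^esub>"
proof -
  let ?K = "ab_modp_sub p G"
  interpret DG: normal ?K G using ab_sub_normal .
  obtain g where g: "g \<in> carrier G" "XX = ?K #> g"
    using assms unfolding carrier_FactGroup by blast
  have h: "(?K #> g) [^]\<^bsub>G Mod ?K\<^esub> (n::nat) = ?K #> (g [^] n)" for n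
  proof (induction n)
    case 0 then show ?case using DG.subset by (simp add: coset_mult_one)
  next
    case (Suc n) then show ?case using g(1) by (simp add: DG.rcos_sum)
  qed
  have j: "?K #> (g [^] p) = ?K"
    by (rule coset_join2[OF nat_pow_closed[OF g(1)] ab_sub_subgroup ab_sub_pow[OF g(1)]])
  show ?thesis using h[of p] j g(2) by simp
qed

lemma (in group) normal_closure_normal:
  assumes "S \<subseteq> carrier G"
  shows "normal_closure G S \<lhd> G"
  unfolding normal_closure_def
proof (rule normal_generateI)
  show "{inv x \<otimes> s \<otimes> x |x s. x \<in> carrier G \<and> s \<in> S} \<subseteq> carrier G" using assms by auto
next
  fix h g assume "h \<in> {inv x \<otimes> s \<otimes> x |x s. x \<in> carrier G \<and> s \<in> S}" and g: "g \<in> carrier G"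
  then obtain x s where xs: "x \<in> carrier G" "s \<in> S" "h = inv x \<otimes> s \<otimes> x" by auto
  have sc: "s \<in> carrier G" using xs assms by auto
  have "g \<otimes> h \<otimes> inv g = inv (x \<otimes> inv g) \<otimes> s \<otimes> (x \<otimes> inv g)"
    using xs sc g by (simp add: m_assoc inv_mult_group)
  then show "g \<otimes> h \<otimes> inv g \<in> {inv x \<otimes> s \<otimes> x |x s. x \<in> carrier G \<and> s \<in> S}"
    using xs g by blast
qed

lemma (in group) normal_closure_kernel:
  assumes "group K" "\<phi> \<in> hom G K" "S \<subseteq> carrier G" "\<forall>s\<in>S. \<phi> s = \<one>\<^bsub>K\<^esub>"
  shows "\<forall>n\<in>normal_closure G S. \<phi> n = \<one>\<^bsub>K\<^esub>"
proof -
  interpret hh: group_hom G K \<phi> using assms by (simp add: group_hom_def group_hom_axioms_def is_group)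
  have "normal_closure G S \<subseteq> kernel G K \<phi>"
    unfolding normal_closure_def
    by (rule generate_subgroup_incl[OF _ hh.subgroup_kernel]) (use assms in \<open>auto simp: kernel_def\<close>)
  then show ?thesis by (auto simp: kernel_def)
qed

definition qmap :: "('a \<Rightarrow> 'c) \<Rightarrow> 'a set \<Rightarrow> 'c" where
  "qmap \<phi> C = \<phi> (SOME w. w \<in> C)"

lemma (in normal) qmap_coset:
  assumes "group K" "\<phi> \<in> hom G K" "\<forall>n\<in>H. \<phi> n = \<one>\<^bsub>K\<^esub>" "g \<in> carrier G" "w \<in> H #> g"
  shows "\<phi> w = \<phi> g"
proof -
  interpret hh: group_hom G K \<phi> using assms by (simp add: group_hom_def group_hom_axioms_def is_group)
  obtain n where "n \<in> H" "w = n \<otimes> g" using assms(5) unfolding r_coset_def by auto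
  then show ?thesis using assms(3,4) by simp
qed

lemma (in normal) qmap_rcos:
  assumes "group K" "\<phi> \<in> hom G K" "\<forall>n\<in>H. \<phi> n = \<one>\<^bsub>K\<^esub>" "g \<in> carrier G"
  shows "qmap \<phi> (H #> g) = \<phi> g"
  unfolding qmap_def
  by (rule qmap_coset[OF assms]) (meson assms(4) rcos_self subgroup_axioms someI)

lemma (in normal) qmap_hom:
  assumes "group K" "\<phi> \<in> hom G K" "\<forall>n\<in>H. \<phi> n = \<one>\<^bsub>K\<^esub>"
  shows "qmap \<phi> \<in> hom (G Mod H) K"
proof (rule homI)
  interpret hh: group_hom G K \<phi> using assms by (simp add: group_hom_def group_hom_axioms_def is_group)
  fix XX assume "XX \<in> carrier (G Mod H)"
  then obtain g where "g \<in> carrier G" "XX = H #> g" unfolding FactGroup_def RCOSETS_def by auto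
  then show "qmap \<phi> XX \<in> carrier K" using qmap_rcos[OF assms] by simp
next
  interpret hh: group_hom G K \<phi> using assms by (simp add: group_hom_def group_hom_axioms_def is_group)
  fix XX Y assume "XX \<in> carrier (G Mod H)" "Y \<in> carrier (G Mod H)"
  then obtain g h where "g \<in> carrier G" "XX = H #> g" "h \<in> carrier G" "Y = H #> h"
    unfolding FactGroup_def RCOSETS_def by auto
  then show "qmap \<phi> (XX \<otimes>\<^bsub>G Mod H\<^esub> Y) = qmap \<phi> XX \<otimes>\<^bsub>K\<^esub> qmap \<phi> Y"
    using qmap_rcos[OF assms] by (simp add: rcos_sum)
qed

definition handle :: "nat \<Rightarrow> (nat \<times> bool) list" where
  "handle i = [(2*i, False), (2*i+1, False), (2*i, True), (2*i+1, True)]"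

lemma surface_relator_alt: "surface_relator g = reduce_word (concat (map handle [0..<g]))"
  by (simp add: surface_relator_def handle_def[abs_def])

lemma relator_carrier: "surface_relator g \<in> carrier (F (2*g))"
proof -
  have "\<forall>l\<in>set (concat (map handle [0..<g])). fst l < 2*g" by (auto simp: handle_def)
  then show ?thesis unfolding surface_relator_alt free_grp_carrier_iff
    using set_reduce_word reduced_reduce_word by blast
qed

lemma es_concat_handles: "es (concat (map handle xs)) k = 0"
  by (induction xs) (auto simp: handle_def es_Cons)

lemma es_relator[simp]: "es (surface_relator g) k = 0"
  by (simp add: surface_relator_alt es_concat_handles)

abbreviation NN :: "nat \<Rightarrow> (nat \<times> bool) list set" where
  "NN g \<equiv> normal_closure (F (2*g)) {surface_relator g}"

lemma F_group: "group (F n)" by (rule free_grp_group)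

lemma NN_normal: "NN g \<lhd> F (2*g)"
  using group.normal_closure_normal[OF F_group] relator_carrier by blast

lemma S_group: "group (surface_group g)"
  unfolding surface_group_def using normal.factorgroup_is_group[OF NN_normal] .

lemma es_NN: "n \<in> NN g \<Longrightarrow> es n k = 0"
proof -
  interpret FF: group "F (2*g)" by (rule F_group)
  let ?Z = "{w \<in> carrier (F (2*g)). \<forall>k. es w k = 0}"
  have sg: "subgroup ?Z (F (2*g))"
  proof (rule FF.subgroupI)
    show "?Z \<subseteq> carrier (F (2 * g))" by auto
    show "?Z \<noteq> {}" using FF.one_closed by (auto intro!: exI[of _ "\<one>\<^bsub>F (2*g)\<^esub>"])
  next
    fix a assume "a \<in> ?Z" then show "inv\<^bsub>F (2 * g)\<^esub> a \<in> ?Z" using FF.inv_closed by auto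
  next
    fix a b assume "a \<in> ?Z" "b \<in> ?Z" then show "a \<otimes>\<^bsub>F (2 * g)\<^esub> b \<in> ?Z" using FF.m_closed by auto
  qed
  have "NN g \<subseteq> ?Z"
    unfolding normal_closure_def
  proof (rule group.generate_subgroup_incl[OF F_group _ sg])
    show "{inv\<^bsub>F (2 * g)\<^esub> x \<otimes>\<^bsub>F (2 * g)\<^esub> s \<otimes>\<^bsub>F (2 * g)\<^esub> x |x s. x \<in> carrier (F (2 * g)) \<and> s \<in> {surface_relator g}} \<subseteq> ?Z"
      using relator_carrier FF.inv_closed FF.m_closed by auto
  qed
  then show "n \<in> NN g \<Longrightarrow> es n k = 0" by auto
qed

lemma es_coset: "c \<in> carrier (F (2*g)) \<Longrightarrow> w \<in> NN g #>\<^bsub>F (2*g)\<^esub> c \<Longrightarrow> es w k = es c k"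
  unfolding r_coset_def using es_NN by auto

abbreviation SG where "SG g \<equiv> surface_group g"
abbreviation KS where "KS p g \<equiv> ab_modp_sub p (SG g)"
abbreviation AA where "AA p g \<equiv> ab_modp p (SG g)"

definition Psi :: "nat \<Rightarrow> nat \<Rightarrow> (nat \<times> bool) list \<Rightarrow> (nat \<times> bool) list set set" where
  "Psi p g w = KS p g #>\<^bsub>SG g\<^esub> (NN g #>\<^bsub>F (2*g)\<^esub> w)"

lemma A_group: "group (AA p g)"
  unfolding ab_modp_def using normal.factorgroup_is_group[OF group.ab_sub_normal[OF S_group]] .

lemma A_comm: "comm_group (AA p g)"
  unfolding ab_modp_def using group.ab_comm[OF S_group] .

lemma A_pow: "XX \<in> carrier (AA p g) \<Longrightarrow> XX [^]\<^bsub>AA p g\<^esub> p = \<one>\<^bsub>AA p g\<^esub>"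
  unfolding ab_modp_def using group.ab_pow[OF S_group] .

lemma pi1_hom: "(\<lambda>w. NN g #>\<^bsub>F (2*g)\<^esub> w) \<in> hom (F (2*g)) (SG g)"
  unfolding surface_group_def using normal.r_coset_hom_Mod[OF NN_normal] .

lemma pi2_hom: "(\<lambda>x. KS p g #>\<^bsub>SG g\<^esub> x) \<in> hom (SG g) (AA p g)"
  unfolding ab_modp_def using normal.r_coset_hom_Mod[OF group.ab_sub_normal[OF S_group]] .

lemma Psi_hom: "Psi p g \<in> hom (F (2*g)) (AA p g)"
proof -
  have "(\<lambda>x. KS p g #>\<^bsub>SG g\<^esub> x) \<circ> (\<lambda>w. NN g #>\<^bsub>F (2*g)\<^esub> w) \<in> hom (F (2*g)) (AA p g)"
    using hom_compose[OF pi1_hom pi2_hom] .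
  moreover have "Psi p g = (\<lambda>x. KS p g #>\<^bsub>SG g\<^esub> x) \<circ> (\<lambda>w. NN g #>\<^bsub>F (2*g)\<^esub> w)"
    by (simp add: fun_eq_iff Psi_def)
  ultimately show ?thesis by simp
qed

lemma S_carrier: "x \<in> carrier (SG g) \<Longrightarrow> \<exists>c \<in> carrier (F (2*g)). x = NN g #>\<^bsub>F (2*g)\<^esub> c"
  unfolding surface_group_def FactGroup_def RCOSETS_def by auto

lemma KS_es: "C \<in> KS p g \<Longrightarrow> c \<in> C \<Longrightarrow> int p dvd es c k"
proof -
  let ?S = "SG g" and ?F = "F (2*g)"
  interpret S: group ?S by (rule S_group)
  interpret N: normal "NN g" ?F by (rule NN_normal)
  let ?Z = "{C \<in> carrier ?S. \<forall>c\<in>C. \<forall>k. int p dvd es c k}"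
  have mult: "C \<otimes>\<^bsub>?S\<^esub> D = C <#>\<^bsub>?F\<^esub> D" for C D by (simp add: surface_group_def)
  have sg: "subgroup ?Z ?S"
  proof (rule S.subgroupI)
    show "?Z \<subseteq> carrier ?S" by auto
    have "NN g \<in> carrier ?S" "\<one>\<^bsub>?S\<^esub> = NN g" using S.one_closed by (auto simp: surface_group_def)
    then show "?Z \<noteq> {}" using es_NN by (auto intro!: exI[of _ "NN g"])
  next
    fix a assume a: "a \<in> ?Z"
    have ic: "inv\<^bsub>?S\<^esub> a \<in> carrier ?S" using a S.inv_closed by blast
    from a have "inv\<^bsub>?S\<^esub> a = set_inv\<^bsub>?F\<^esub> a"
      using N.inv_FactGroup by (simp add: surface_group_def)
    moreover have "a \<subseteq> carrier ?F"
    proof -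
      obtain c where "c \<in> carrier ?F" "a = NN g #>\<^bsub>?F\<^esub> c" using S_carrier a by blast
      then show ?thesis using N.r_coset_subset_G[OF N.subset] by blast
    qed
    ultimately have "\<forall>c\<in>inv\<^bsub>?S\<^esub> a. \<forall>k. int p dvd es c k" using a by (auto simp: SET_INV_def)
    then show "inv\<^bsub>?S\<^esub> a \<in> ?Z" using ic by blast
  next
    fix a b assume "a \<in> ?Z" "b \<in> ?Z"
    then show "a \<otimes>\<^bsub>?S\<^esub> b \<in> ?Z" using S.m_closed by (auto simp: mult set_mult_def)
  qed
  have gens: "derived_set ?S (carrier ?S) \<union> {x [^]\<^bsub>?S\<^esub> p |x. x \<in> carrier ?S} \<subseteq> ?Z"
  proof -
    have hom: "group_hom ?F ?S (\<lambda>w. NN g #>\<^bsub>?F\<^esub> w)"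
      using pi1_hom F_group S_group by (simp add: group_hom_def group_hom_axioms_def)
    have "XX \<in> ?Z" if XXd: "XX \<in> derived_set ?S (carrier ?S)" for XX
    proof -
      obtain C D where CD: "C \<in> carrier ?S" "D \<in> carrier ?S" "XX = C \<otimes>\<^bsub>?S\<^esub> D \<otimes>\<^bsub>?S\<^esub> inv\<^bsub>?S\<^esub> C \<otimes>\<^bsub>?S\<^esub> inv\<^bsub>?S\<^esub> D"
      proof -
        from XXd obtain C where C: "C \<in> carrier ?S" "XX \<in> (\<Union>h2\<in>carrier ?S. {C \<otimes>\<^bsub>?S\<^esub> h2 \<otimes>\<^bsub>?S\<^esub> inv\<^bsub>?S\<^esub> C \<otimes>\<^bsub>?S\<^esub> inv\<^bsub>?S\<^esub> h2})"
          by (rule UN_E)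
        from C(2) obtain D where D: "D \<in> carrier ?S" "XX \<in> {C \<otimes>\<^bsub>?S\<^esub> D \<otimes>\<^bsub>?S\<^esub> inv\<^bsub>?S\<^esub> C \<otimes>\<^bsub>?S\<^esub> inv\<^bsub>?S\<^esub> D}"
          by (rule UN_E)
        show ?thesis using C(1) D by (intro that) auto
      qed
      obtain c d where cd: "c \<in> carrier ?F" "C = NN g #>\<^bsub>?F\<^esub> c" "d \<in> carrier ?F" "D = NN g #>\<^bsub>?F\<^esub> d"
        using S_carrier CD by metis
      let ?u = "c \<otimes>\<^bsub>?F\<^esub> d \<otimes>\<^bsub>?F\<^esub> inv\<^bsub>?F\<^esub> c \<otimes>\<^bsub>?F\<^esub> inv\<^bsub>?F\<^esub> d"
      have uc: "?u \<in> carrier ?F" using cd by (simp add: N.inv_closed N.m_closed)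
      have XXe: "XX = NN g #>\<^bsub>?F\<^esub> ?u"
        using CD cd group_hom.hom_mult[OF hom] group_hom.hom_inv[OF hom] by (simp add: N.inv_closed N.m_closed)
      have e0: "es ?u k = 0" for k
        using cd by simp
      have "XX \<in> carrier ?S" using CD by simp
      moreover have "\<forall>w\<in>XX. \<forall>k. int p dvd es w k"
        using es_coset[OF uc] e0 XXe by simp
      ultimately show ?thesis by blast
    qed
    moreover have "XX \<in> ?Z" if XXp: "XX \<in> {x [^]\<^bsub>?S\<^esub> p |x. x \<in> carrier ?S}" for XX
    proof -
      obtain C where C: "C \<in> carrier ?S" "XX = C [^]\<^bsub>?S\<^esub> p" using XXp by blast
      obtain c where c: "c \<in> carrier ?F" "C = NN g #>\<^bsub>?F\<^esub> c" using S_carrier C by metis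
      have "XX = NN g #>\<^bsub>?F\<^esub> (c [^]\<^bsub>?F\<^esub> p)"
        using C c group_hom.hom_nat_pow[OF hom] by simp
      moreover have uc: "c [^]\<^bsub>?F\<^esub> p \<in> carrier ?F" using c by simp
      ultimately have "\<forall>w\<in>XX. \<forall>k. int p dvd es w k"
        using es_coset[OF uc] c by simp
      moreover have "XX \<in> carrier ?S" using C by simp
      ultimately show ?thesis by blast
    qed
    ultimately show ?thesis by blast
  qed
  have "KS p g \<subseteq> ?Z"
    unfolding ab_modp_sub_def by (rule S.generate_subgroup_incl[OF gens sg])
  then show "C \<in> KS p g \<Longrightarrow> c \<in> C \<Longrightarrow> int p dvd es c k" by auto
qed

lemma Psi_eq_dvd:
  assumes "w \<in> carrier (F (2*g))" "w' \<in> carrier (F (2*g))" "Psi p g w = Psi p g w'"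
  shows "int p dvd es w k - es w' k"
proof -
  let ?S = "SG g" and ?F = "F (2*g)" and ?A = "AA p g"
  interpret A: group ?A by (rule A_group)
  interpret F: group ?F by (rule F_group)
  interpret hh: group_hom ?F ?A "Psi p g"
    using Psi_hom by (simp add: group_hom_def group_hom_axioms_def A.is_group F.is_group)
  interpret N: normal "NN g" ?F by (rule NN_normal)
  interpret S: group ?S by (rule S_group)
  interpret K: normal "KS p g" ?S by (rule S.ab_sub_normal)
  let ?u = "w \<otimes>\<^bsub>?F\<^esub> inv\<^bsub>?F\<^esub> w'"
  have uc: "?u \<in> carrier ?F" using assms by simp
  have "Psi p g ?u = \<one>\<^bsub>?A\<^esub>" using assms by simp
  then have "KS p g #>\<^bsub>?S\<^esub> (NN g #>\<^bsub>?F\<^esub> ?u) = KS p g"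
    by (simp add: Psi_def ab_modp_def)
  moreover have Cc: "NN g #>\<^bsub>?F\<^esub> ?u \<in> carrier ?S"
    using uc by (simp add: surface_group_def FactGroup_def RCOSETS_def) blast
  ultimately have "NN g #>\<^bsub>?F\<^esub> ?u \<in> KS p g"
    using S.rcos_self[OF Cc K.subgroup_axioms] by simp
  moreover have "?u \<in> NN g #>\<^bsub>?F\<^esub> ?u" using F.rcos_self[OF uc N.subgroup_axioms] .
  ultimately have "int p dvd es ?u k" using KS_es by blast
  then show ?thesis using assms by simp
qed

lemma Psi_gen_pow: "k < 2*g \<Longrightarrow> Psi p g (gen k) [^]\<^bsub>AA p g\<^esub> p = \<one>\<^bsub>AA p g\<^esub>"
  using A_pow Psi_hom gen_carrier by (metis hom_in_carrier)

lemma Psi_one: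
  assumes "w \<in> carrier (F (2*g))" "\<forall>k<2*g. int p dvd es w k"
  shows "Psi p g w = \<one>\<^bsub>AA p g\<^esub>"
proof -
  have "Psi p g w = Psi p g \<one>\<^bsub>F (2*g)\<^esub>"
  proof (rule hom_free_cong[OF A_comm Psi_hom, where p=p])
    show "\<forall>k<2 * g. Psi p g (gen k) [^]\<^bsub>AA p g\<^esub> p = \<one>\<^bsub>AA p g\<^esub>" using Psi_gen_pow by blast
    show "w \<in> carrier (F (2 * g))" by (rule assms(1))
    show "\<one>\<^bsub>F (2*g)\<^esub> \<in> carrier (F (2 * g))" by (rule monoid.one_closed[OF group.is_monoid[OF F_group]])
    show "\<forall>k<2 * g. es w k mod int p = es \<one>\<^bsub>F (2*g)\<^esub> k mod int p" using assms(2) by simp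
  qed
  then show ?thesis using Psi_hom group_hom.hom_one[of "F (2*g)" "AA p g" "Psi p g"] A_group F_group
    by (simp add: group_hom_def group_hom_axioms_def)
qed

lemma A_elem:
  assumes "\<alpha> \<in> carrier (AA p g)" "x \<in> \<alpha>" "w \<in> x"
  shows "w \<in> carrier (F (2*g)) \<and> x = NN g #>\<^bsub>F (2*g)\<^esub> w \<and> \<alpha> = Psi p g w \<and> x \<in> carrier (SG g)"
proof -
  let ?S = "SG g" and ?F = "F (2*g)"
  interpret F: group ?F by (rule F_group)
  interpret N: normal "NN g" ?F by (rule NN_normal)
  interpret S: group ?S by (rule S_group)
  interpret K: normal "KS p g" ?S by (rule S.ab_sub_normal)
  obtain y where y: "y \<in> carrier ?S" "\<alpha> = KS p g #>\<^bsub>?S\<^esub> y"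
    using assms(1) unfolding ab_modp_def FactGroup_def RCOSETS_def by auto
  have xc: "x \<in> carrier ?S" using K.elemrcos_carrier[OF S.is_group y(1)] assms(2) y(2) by simp
  have ax: "\<alpha> = KS p g #>\<^bsub>?S\<^esub> x" using S.repr_independence[OF _ y(1) K.subgroup_axioms] assms(2) y by simp
  obtain c where c: "c \<in> carrier ?F" "x = NN g #>\<^bsub>?F\<^esub> c" using S_carrier xc by metis
  have wc: "w \<in> carrier ?F" using N.elemrcos_carrier[OF F.is_group c(1)] assms(3) c(2) by simp
  have xw: "x = NN g #>\<^bsub>?F\<^esub> w" using F.repr_independence[OF _ c(1) N.subgroup_axioms] assms(3) c by simp
  show ?thesis using wc xw ax xc by (simp add: Psi_def)
qed

lemma A_nonempty:
  assumes "\<alpha> \<in> carrier (AA p g)"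
  shows "\<exists>x\<in>\<alpha>. \<exists>w\<in>x. True"
proof -
  let ?S = "SG g" and ?F = "F (2*g)"
  interpret F: group ?F by (rule F_group)
  interpret N: normal "NN g" ?F by (rule NN_normal)
  interpret S: group ?S by (rule S_group)
  interpret K: normal "KS p g" ?S by (rule S.ab_sub_normal)
  obtain y where y: "y \<in> carrier ?S" "\<alpha> = KS p g #>\<^bsub>?S\<^esub> y"
    using assms(1) unfolding ab_modp_def FactGroup_def RCOSETS_def by auto
  obtain c where c: "c \<in> carrier ?F" "y = NN g #>\<^bsub>?F\<^esub> c" using S_carrier y by metis
  show ?thesis using S.rcos_self[OF y(1) K.subgroup_axioms] F.rcos_self[OF c(1) N.subgroup_axioms] y c by blast
qed

lemma A_surj: "\<alpha> \<in> carrier (AA p g) \<Longrightarrow> \<exists>w\<in>carrier (F (2*g)). \<alpha> = Psi p g w"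
  using A_nonempty A_elem by metis

lemma Psi_mem: "w \<in> carrier (F (2*g)) \<Longrightarrow> NN g #>\<^bsub>F (2*g)\<^esub> w \<in> Psi p g w"
proof -
  assume w: "w \<in> carrier (F (2*g))"
  interpret S: group "SG g" by (rule S_group)
  interpret K: normal "KS p g" "SG g" by (rule S.ab_sub_normal)
  have "NN g #>\<^bsub>F (2*g)\<^esub> w \<in> carrier (SG g)" using pi1_hom w by (auto simp: hom_def)
  then show ?thesis unfolding Psi_def using S.rcos_self K.subgroup_axioms by blast
qed

definition fA :: "nat \<Rightarrow> nat \<Rightarrow> nat \<Rightarrow> (nat \<times> bool) list" where
  "fA c d j = (if j = c then gen 0 else if j = d then gen 1 else [])"

definition fB :: "nat \<Rightarrow> nat \<Rightarrow> nat \<Rightarrow> (nat \<times> bool) list" where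
  "fB i i' j = (if j = 2*i then gen 0 else if j = 2*i+1 then gen 1
     else if j = 2*i' then gen 1 else if j = 2*i'+1 then gen 0 else [])"

lemma fA_reduced: "reduced (fA c d j)" by (simp add: fA_def gen_def)
lemma fB_reduced: "reduced (fB i i' j)" by (simp add: fB_def gen_def)

lemma concat_handles_lw:
  "concat (map (lw f) (concat (map handle xs))) =
   concat (map (\<lambda>i. f (2*i) @ f (2*i+1) @ inv_word (f (2*i)) @ inv_word (f (2*i+1))) xs)"
  by (induction xs) (simp_all add: handle_def lw_def)

lemma reduce_concat_blocks:
  "reduce_word (concat (map B xs)) = reduce_word (concat (map (\<lambda>i. reduce_word (B i)) xs))"
proof (induction xs)
  case Nil then show ?case by simp
next
  case (Cons x xs)
  have "reduce_word (concat (map B (x # xs))) = reduce_word (reduce_word (B x) @ reduce_word (concat (map B xs)))"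
    by (simp add: reduce_append_both[of "B x"])
  also have "\<dots> = reduce_word (reduce_word (B x) @ reduce_word (concat (map (\<lambda>i. reduce_word (B i)) xs)))"
    using Cons by simp
  also have "\<dots> = reduce_word (concat (map (\<lambda>i. reduce_word (B i)) (x # xs)))"
    by (simp flip: reduce_append_right)
  finally show ?case .
qed

lemma subst_relator:
  assumes "\<forall>k. reduced (f k)"
  shows "subst f (surface_relator g) = reduce_word (concat (map (\<lambda>i. reduce_word (f (2*i) @ f (2*i+1) @ inv_word (f (2*i)) @ inv_word (f (2*i+1)))) [0..<g]))"
  unfolding surface_relator_alt subst_reduce[OF assms]
  by (simp add: subst_def concat_handles_lw reduce_concat_blocks[symmetric])

lemma block_trivial:
  assumes "reduced u" "reduced v" "u = [] \<or> v = []"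
  shows "reduce_word (u @ v @ inv_word u @ inv_word v) = []"
  using assms reduce_inv_right by (auto simp: inv_word_def)

lemma relator_fA:
  assumes "c div 2 \<noteq> d div 2"
  shows "subst (fA c d) (surface_relator g) = []"
proof -
  have "reduce_word (fA c d (2*i) @ fA c d (2*i+1) @ inv_word (fA c d (2*i)) @ inv_word (fA c d (2*i+1))) = []" for i
  proof (rule block_trivial[OF fA_reduced fA_reduced])
    show "fA c d (2*i) = [] \<or> fA c d (2*i+1) = []"
    proof (rule ccontr)
      assume "\<not> ?thesis"
      then have "(2*i = c \<or> 2*i = d) \<and> (2*i+1 = c \<or> 2*i+1 = d)" by (auto simp: fA_def split: if_splits)
      then show False using assms by auto
    qed
  qed
  then have e: "(\<lambda>i. reduce_word (fA c d (2*i) @ fA c d (2*i+1) @ inv_word (fA c d (2*i)) @ inv_word (fA c d (2*i+1)))) = (\<lambda>i. [])"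
    by (rule ext)
  have r: "\<forall>k. reduced (fA c d k)" by (simp add: fA_reduced)
  have c0: "concat (map (\<lambda>i. []) xs) = []" for xs :: "nat list" by (induction xs) simp_all
  show ?thesis unfolding subst_relator[OF r] e c0 by (simp add: reduce_word_def)
qed

lemma concat_two:
  assumes "a < b" "\<forall>z. z \<noteq> a \<and> z \<noteq> b \<longrightarrow> B z = []"
  shows "concat (map B [0..<n]) = (if a < n then B a else []) @ (if b < n then B b else [])"
  using assms by (induction n) (auto simp: less_Suc_eq)

lemma relator_fB:
  assumes "i \<noteq> i'" "i < g" "i' < g"
  shows "subst (fB i i') (surface_relator g) = []"
proof -
  let ?B = "\<lambda>z. reduce_word (fB i i' (2*z) @ fB i i' (2*z+1) @ inv_word (fB i i' (2*z)) @ inv_word (fB i i' (2*z+1)))"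
  have Bz: "\<forall>z. z \<noteq> i \<and> z \<noteq> i' \<longrightarrow> ?B z = []"
    using assms(1) by (auto simp: fB_def reduce_word_def inv_word_def)
  have Bi: "?B i = [(0, False), (1, False), (0, True), (1, True)]"
    using assms(1) by (simp add: fB_def gen_def inv_word_def flip_def reduce_word_def)
  have Bi': "?B i' = [(1, False), (0, False), (1, True), (0, True)]"
    using assms(1) by (simp add: fB_def gen_def inv_word_def flip_def reduce_word_def)
  have r: "\<forall>k. reduced (fB i i' k)" by (simp add: fB_reduced)
  have w1: "reduce_word [(0, False), (Suc 0, False), (0, True), (Suc 0, True), (Suc 0, False), (0, False), (Suc 0, True), (0, True)] = []"
    by (simp add: reduce_word_def)
  have w2: "reduce_word [(Suc 0, False), (0, False), (Suc 0, True), (0, True), (0, False), (Suc 0, False), (0, True), (Suc 0, True)] = []"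
    by (simp add: reduce_word_def)
  show ?thesis
  proof (cases "i < i'")
    case True
    then have "concat (map ?B [0..<g]) = ?B i @ ?B i'" using concat_two[OF True Bz] assms by simp
    then show ?thesis unfolding subst_relator[OF r] Bi Bi' using w1 by simp
  next
    case False
    then have lt: "i' < i" using assms(1) by simp
    have Bz': "\<forall>z. z \<noteq> i' \<and> z \<noteq> i \<longrightarrow> ?B z = []" using Bz by blast
    have "concat (map ?B [0..<g]) = ?B i' @ ?B i" using concat_two[OF lt Bz'] assms by simp
    then show ?thesis unfolding subst_relator[OF r] Bi Bi' using w2 by simp
  qed
qed

lemma es_gen: "es (gen a) k = (if a = k then 1 else 0)"
  by (simp add: gen_def es_def)

lemma sumA0:
  assumes "c < m" "c \<noteq> d"
  shows "(\<Sum>j<m. Xf j * es (fA c d j) 0) = Xf c"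
proof -
  have "(\<Sum>j<m. Xf j * es (fA c d j) 0) = (\<Sum>j<m. if j = c then Xf j else 0)"
    by (rule sum.cong) (auto simp: fA_def es_gen)
  then show ?thesis using assms by simp
qed

lemma sumA1:
  assumes "d < m" "c \<noteq> d"
  shows "(\<Sum>j<m. Xf j * es (fA c d j) 1) = Xf d"
proof -
  have "(\<Sum>j<m. Xf j * es (fA c d j) 1) = (\<Sum>j<m. if j = d then Xf j else 0)"
    by (rule sum.cong) (use assms in \<open>auto simp: fA_def es_gen\<close>)
  then show ?thesis using assms by simp
qed

lemma sumB0:
  assumes "i \<noteq> i'" "2*i+1 < m" "2*i'+1 < m"
  shows "(\<Sum>j<m. Xf j * es (fB i i' j) 0) = Xf (2*i) + Xf (2*i'+1)"
proof -
  have "(\<Sum>j<m. Xf j * es (fB i i' j) 0) = (\<Sum>j<m. (if j = 2*i then Xf j else 0) + (if j = 2*i'+1 then Xf j else 0))"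
    by (rule sum.cong) (use assms in \<open>auto simp: fB_def es_gen\<close>)
  also have "\<dots> = Xf (2*i) + Xf (2*i'+1)" using assms by (simp add: sum.distrib)
  finally show ?thesis .
qed

lemma sumB1:
  assumes "i \<noteq> i'" "2*i+1 < m" "2*i'+1 < m"
  shows "(\<Sum>j<m. Xf j * es (fB i i' j) 1) = Xf (2*i+1) + Xf (2*i')"
proof -
  have "(\<Sum>j<m. Xf j * es (fB i i' j) 1) = (\<Sum>j<m. (if j = 2*i+1 then Xf j else 0) + (if j = 2*i' then Xf j else 0))"
    by (rule sum.cong) (use assms in \<open>auto simp: fB_def es_gen\<close>)
  also have "\<dots> = Xf (2*i+1) + Xf (2*i')" using assms by (simp add: sum.distrib)
  finally show ?thesis .
qed

lemma inverse_mod: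
  assumes "Factorial_Ring.prime p" "\<not> int p dvd D"
  shows "\<exists>u. int p dvd (u * D - 1)"
proof -
  have "Factorial_Ring.prime (int p)" using assms(1) by simp
  then have "coprime (int p) D" using assms(2) prime_imp_coprime by blast
  then have g: "gcd D (int p) = 1" by (simp add: coprime_iff_gcd_eq_1 gcd.commute)
  obtain u v where "u * D + v * int p = gcd D (int p)" using bezout_int by blast
  then have "u * D - 1 = int p * (- v)" using g by (simp add: algebra_simps)
  then show ?thesis by (metis dvdI)
qed

lemma solve1:
  assumes "Factorial_Ring.prime p" "\<not> int p dvd A"
  shows "\<exists>a. (a * A) mod int p = t mod int p"
proof -
  obtain u where u: "int p dvd (u * D - 1)" if "D = A" for D using inverse_mod[OF assms] by blast
  have "a * A - t = t * (u * A - 1)" if "a = t * u" for a using that by (simp add: algebra_simps)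
  then have "int p dvd (t * u) * A - t" using u[of A] by (simp add: dvd_mult)
  then show ?thesis by (metis mod_eq_dvd_iff)
qed

lemma solve2:
  assumes "Factorial_Ring.prime p" "\<not> int p dvd (A0 * B1 - A1 * B0)"
  shows "\<exists>a b. (a * A0 + b * B0) mod int p = t0 mod int p \<and> (a * A1 + b * B1) mod int p = t1 mod int p"
proof -
  obtain u where u: "int p dvd (u * (A0 * B1 - A1 * B0) - 1)" using inverse_mod[OF assms] by blast
  define a where "a = u * (t0 * B1 - t1 * B0)"
  define b where "b = u * (t1 * A0 - t0 * A1)"
  have e0: "a * A0 + b * B0 - t0 = t0 * (u * (A0 * B1 - A1 * B0) - 1)"
    by (simp add: a_def b_def algebra_simps)
  have e1: "a * A1 + b * B1 - t1 = t1 * (u * (A0 * B1 - A1 * B0) - 1)"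
    by (simp add: a_def b_def algebra_simps)
  have "int p dvd a * A0 + b * B0 - t0" unfolding e0 using u by (simp add: dvd_mult)
  moreover have "int p dvd a * A1 + b * B1 - t1" unfolding e1 using u by (simp add: dvd_mult)
  ultimately show ?thesis by (metis mod_eq_dvd_iff)
qed

lemma subst_gen: "\<forall>k. reduced (f k) \<Longrightarrow> subst f (gen j) = f j"
  by (simp add: subst_def gen_def lw_def reduce_word_reduced)

lemma final:
  fixes p g r :: nat and H :: "(nat \<times> bool) list set set set"
  assumes fr: "\<forall>k. reduced (f k)" and fc: "\<forall>k<2*g. f k \<in> carrier (F r)"
    and frel: "subst f (surface_relator g) = []"
    and gens: "\<forall>k<r. \<exists>j<2*g. f j = gen k"
    and cover: "\<forall>t::nat \<Rightarrow> int. \<exists>w\<in>carrier (F (2*g)). Psi p g w \<in> H \<and> (\<forall>k<r. es (subst f w) k mod int p = t k mod int p)"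
  shows "\<exists>q. q \<in> hom (surface_group g) (free_grp r)
           \<and> q ` carrier (surface_group g) = carrier (free_grp r)
           \<and> (\<forall>y \<in> carrier (ab_modp p (free_grp r)).
                \<exists>h \<in> H. \<exists>x \<in> h. y = ab_modp_sub p (free_grp r) #>\<^bsub>free_grp r\<^esub> q x)"
proof -
  let ?F = "F (2*g)" and ?R = "F r" and ?q = "qmap (subst f)"
  interpret FF: group ?F by (rule F_group)
  interpret R: group ?R by (rule F_group)
  have sh: "subst f \<in> hom ?F ?R" by (rule subst_hom[OF fc fr])
  have ker: "\<forall>n\<in>NN g. subst f n = \<one>\<^bsub>?R\<^esub>"
    by (rule FF.normal_closure_kernel[OF R.is_group sh]) (use relator_carrier frel in \<open>auto simp: free_grp_one\<close>)
  have qh: "?q \<in> hom (SG g) ?R"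
    unfolding surface_group_def using normal.qmap_hom[OF NN_normal F_group sh ker] .
  have qr: "?q (NN g #>\<^bsub>?F\<^esub> w) = subst f w" if "w \<in> carrier ?F" for w
    by (rule normal.qmap_rcos[OF NN_normal F_group sh ker that])
  have qq: "group_hom (SG g) ?R ?q" by (rule group_hom.intro[OF S_group R.is_group group_hom_axioms.intro[OF qh]])
  have surj: "?q ` carrier (SG g) = carrier ?R"
  proof
    show "?q ` carrier (SG g) \<subseteq> carrier ?R" using hom_in_carrier[OF qh] by blast
  next
    have "gen ` {..<r} \<subseteq> ?q ` carrier (SG g)"
    proof
      fix y assume "y \<in> gen ` {..<r}"
      then obtain k where k: "k < r" "y = gen k" by auto
      obtain j where j: "j < 2*g" "f j = gen k" using gens k by blast
      have gj: "gen j \<in> carrier ?F" using j gen_carrier by blast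
      have "NN g #>\<^bsub>?F\<^esub> gen j \<in> carrier (SG g)" using hom_in_carrier[OF pi1_hom gj] .
      moreover have "?q (NN g #>\<^bsub>?F\<^esub> gen j) = y" using qr[OF gj] subst_gen[OF fr] j k by simp
      ultimately show "y \<in> ?q ` carrier (SG g)" by force
    qed
    then have "generate ?R (gen ` {..<r}) \<subseteq> ?q ` carrier (SG g)"
      by (rule R.generate_subgroup_incl[OF _ group_hom.img_is_subgroup[OF qq]])
    then show "carrier ?R \<subseteq> ?q ` carrier (SG g)" using carrier_generate by blast
  qed
  have modp: "\<forall>y \<in> carrier (ab_modp p ?R). \<exists>h \<in> H. \<exists>x \<in> h. y = ab_modp_sub p ?R #>\<^bsub>?R\<^esub> ?q x"
  proof
    fix y assume y: "y \<in> carrier (ab_modp p ?R)"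
    let ?K = "ab_modp_sub p ?R"
    interpret KK: normal ?K ?R by (rule R.ab_sub_normal)
    obtain v where v: "v \<in> carrier ?R" "y = ?K #>\<^bsub>?R\<^esub> v"
      using y unfolding ab_modp_def carrier_FactGroup by blast
    obtain w where w: "w \<in> carrier ?F" "Psi p g w \<in> H" "\<forall>k<r. es (subst f w) k mod int p = es v k mod int p"
      using cover by blast
    have swc: "subst f w \<in> carrier ?R" using hom_in_carrier[OF sh w(1)] .
    have "?K #>\<^bsub>?R\<^esub> v = ?K #>\<^bsub>?R\<^esub> subst f w"
    proof (rule hom_free_cong[OF R.ab_comm KK.r_coset_hom_Mod, where p=p])
      show "\<forall>k<r. (?K #>\<^bsub>?R\<^esub> gen k) [^]\<^bsub>?R Mod ?K\<^esub> p = \<one>\<^bsub>?R Mod ?K\<^esub>"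
      proof (intro allI impI)
        fix k assume "k < r"
        have "?K #>\<^bsub>?R\<^esub> gen k \<in> carrier (?R Mod ?K)"
          using hom_in_carrier[OF KK.r_coset_hom_Mod gen_carrier[OF \<open>k < r\<close>]] .
        then show "(?K #>\<^bsub>?R\<^esub> gen k) [^]\<^bsub>?R Mod ?K\<^esub> p = \<one>\<^bsub>?R Mod ?K\<^esub>" by (rule R.ab_pow)
      qed
      show "v \<in> carrier ?R" by (rule v(1))
      show "subst f w \<in> carrier ?R" by (rule swc)
      show "\<forall>k<r. es v k mod int p = es (subst f w) k mod int p" using w(3) by simp
    qed
    moreover have "?q (NN g #>\<^bsub>?F\<^esub> w) = subst f w" by (rule qr[OF w(1)])
    moreover have "NN g #>\<^bsub>?F\<^esub> w \<in> Psi p g w" by (rule Psi_mem[OF w(1)])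
    ultimately show "\<exists>h \<in> H. \<exists>x \<in> h. y = ?K #>\<^bsub>?R\<^esub> ?q x" using w(2) v(2) by metis
  qed
  show ?thesis using qh surj modp by blast
qed

lemma es_subst_lin:
  assumes fr: "\<forall>k. reduced (f k)" and fc: "\<forall>k<2*g. f k \<in> carrier (F r)"
    and w1: "w1 \<in> carrier (F (2*g))" and w2: "w2 \<in> carrier (F (2*g))"
  shows "es (subst f (w1 [^]\<^bsub>F (2*g)\<^esub> (a::int) \<otimes>\<^bsub>F (2*g)\<^esub> w2 [^]\<^bsub>F (2*g)\<^esub> (b::int))) k
         = a * es (subst f w1) k + b * es (subst f w2) k"
proof -
  interpret hh: group_hom "F (2*g)" "F r" "subst f"
    by (rule group_hom.intro[OF F_group F_group group_hom_axioms.intro[OF subst_hom[OF fc fr]]])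
  have c1: "subst f w1 \<in> carrier (F r)" and c2: "subst f w2 \<in> carrier (F r)" using w1 w2 by auto
  show ?thesis using w1 w2 c1 c2 by (simp add: hh.hom_int_pow)
qed

lemma es_high: "\<forall>l\<in>set w. fst l < n \<Longrightarrow> n \<le> k \<Longrightarrow> es w k = 0"
  by (induction w) (auto simp: es_Cons)

lemma es_high_carrier: "w \<in> carrier (F n) \<Longrightarrow> n \<le> k \<Longrightarrow> es w k = 0"
  using es_high free_grp_carrier_iff by blast

lemma cover_lemma:
  assumes fr: "\<forall>k. reduced (f k)" and fc: "\<forall>k<2*g. f k \<in> carrier (F r)"
    and Hs: "subgroup H (AA p g)"
    and w1: "w1 \<in> carrier (F (2*g))" "Psi p g w1 \<in> H"
    and w2: "w2 \<in> carrier (F (2*g))" "Psi p g w2 \<in> H"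
    and sol: "\<forall>t::nat\<Rightarrow>int. \<exists>a b. \<forall>k<r. (a * es (subst f w1) k + b * es (subst f w2) k) mod int p = t k mod int p"
  shows "\<forall>t::nat \<Rightarrow> int. \<exists>w\<in>carrier (F (2*g)). Psi p g w \<in> H \<and> (\<forall>k<r. es (subst f w) k mod int p = t k mod int p)"
proof
  fix t :: "nat \<Rightarrow> int"
  interpret A: group "AA p g" by (rule A_group)
  interpret FF: group "F (2*g)" by (rule F_group)
  interpret hP: group_hom "F (2*g)" "AA p g" "Psi p g"
    by (rule group_hom.intro[OF F_group A_group group_hom_axioms.intro[OF Psi_hom]])
  obtain a b where ab: "\<forall>k<r. (a * es (subst f w1) k + b * es (subst f w2) k) mod int p = t k mod int p"
    using sol by blast
  let ?w = "w1 [^]\<^bsub>F (2*g)\<^esub> a \<otimes>\<^bsub>F (2*g)\<^esub> w2 [^]\<^bsub>F (2*g)\<^esub> b"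
  have wc: "?w \<in> carrier (F (2*g))" using w1 w2 by simp
  have "Psi p g ?w = Psi p g w1 [^]\<^bsub>AA p g\<^esub> a \<otimes>\<^bsub>AA p g\<^esub> Psi p g w2 [^]\<^bsub>AA p g\<^esub> b"
    using w1 w2 by (simp add: hP.hom_int_pow)
  moreover have "Psi p g w1 [^]\<^bsub>AA p g\<^esub> a \<in> H" "Psi p g w2 [^]\<^bsub>AA p g\<^esub> b \<in> H"
    using A.subgroup_int_pow_closed[OF Hs] w1 w2 by auto
  ultimately have "Psi p g ?w \<in> H" using subgroup.m_closed[OF Hs] by simp
  moreover have "\<forall>k<r. es (subst f ?w) k mod int p = t k mod int p"
    using ab es_subst_lin[OF fr fc w1(1) w2(1)] by simp
  ultimately show "\<exists>w\<in>carrier (F (2*g)). Psi p g w \<in> H \<and> (\<forall>k<r. es (subst f w) k mod int p = t k mod int p)"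
    using wc by blast
qed

lemma rank_le: "S \<subseteq> H \<Longrightarrow> finite S \<Longrightarrow> generate G S = H \<Longrightarrow> subgroup_rank G H \<le> card S"
  unfolding subgroup_rank_def by (rule Least_le) blast

lemma es_subst_carrier:
  assumes "w \<in> carrier (F (2*g))"
  shows "es (subst f w) k = (\<Sum>j<2*g. es w j * es (f j) k)"
  using assms es_subst free_grp_carrier_iff by blast

lemma fA_carrier:
  assumes "r \<ge> 1" "d < 2*g \<longrightarrow> r \<ge> 2" "c \<noteq> d"
  shows "\<forall>k<2*g. fA c d k \<in> carrier (F r)"
proof (intro allI impI)
  fix k assume k: "k < 2*g"
  have "[] \<in> carrier (F r)" by (simp add: free_grp_carrier_iff)
  moreover have "gen 0 \<in> carrier (F r)" using assms gen_carrier by simp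
  moreover have "k = d \<Longrightarrow> gen 1 \<in> carrier (F r)" using assms k gen_carrier by simp
  ultimately show "fA c d k \<in> carrier (F r)" by (auto simp: fA_def)
qed

lemma fB_carrier: "\<forall>k. fB i i' k \<in> carrier (F 2)"
  using gen_carrier[of 0 2] gen_carrier[of 1 2] by (simp add: fB_def free_grp_carrier_iff)

lemma int_prime_dvd_mult:
  assumes "Factorial_Ring.prime p" "int p dvd a * b" "\<not> int p dvd a"
  shows "int p dvd b"
proof -
  have "Factorial_Ring.prime (int p)" using assms(1) by simp
  then show ?thesis using assms(2,3) prime_dvd_mult_iff by blast
qed

theorem lemma11:
  fixes p g r :: nat and H :: "(nat \<times> bool) list set set set"
  assumes "Factorial_Ring.prime p" and "g \<ge> 2" and "r \<in> {1, 2}"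
    and "subgroup H (ab_modp p (surface_group g))"
    and "subgroup_rank (ab_modp p (surface_group g)) H \<ge> r"
  shows "\<exists>q. q \<in> hom (surface_group g) (free_grp r)
           \<and> q ` carrier (surface_group g) = carrier (free_grp r)
           \<and> (\<forall>y \<in> carrier (ab_modp p (free_grp r)).
                \<exists>h \<in> H. \<exists>x \<in> h. y = ab_modp_sub p (free_grp r) #>\<^bsub>free_grp r\<^esub> q x)"
proof -
  let ?T = "?thesis"
  let ?A = "AA p g" and ?F = "F (2*g)"
  have pr: "Factorial_Ring.prime p" by (rule assms(1))
  have Hs: "subgroup H ?A" by (rule assms(4))
  have Ag: "group ?A" by (rule A_group)
  have Hc: "H \<subseteq> carrier ?A" using Hs subgroup.subset by blast
  have Hrep: "\<And>h. h \<in> H \<Longrightarrow> \<exists>w\<in>carrier ?F. h = Psi p g w" using Hc A_surj by blast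
  have one_H: "\<one>\<^bsub>?A\<^esub> \<in> H" using Hs subgroup.one_closed by blast
  have rk: "subgroup_rank ?A H \<ge> r" by (rule assms(5))
  have r1: "r \<ge> 1" using assms(3) by auto
  obtain w1 c where w1: "w1 \<in> carrier ?F" "Psi p g w1 \<in> H" and c: "c < 2*g" "\<not> int p dvd es w1 c"
  proof -
    have "\<exists>w\<in>carrier ?F. Psi p g w \<in> H \<and> (\<exists>c<2*g. \<not> int p dvd es w c)"
    proof (rule ccontr)
      assume nc: "\<not> ?thesis"
      have "H \<subseteq> {\<one>\<^bsub>?A\<^esub>}"
      proof
        fix h assume h: "h \<in> H"
        then obtain w where w: "w \<in> carrier ?F" "h = Psi p g w" using Hrep by blast
        then have "\<forall>k<2*g. int p dvd es w k" using nc h by blast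
        then have "Psi p g w = \<one>\<^bsub>?A\<^esub>" by (rule Psi_one[OF w(1)])
        then show "h \<in> {\<one>\<^bsub>?A\<^esub>}" using w(2) by simp
      qed
      then have "H = {\<one>\<^bsub>?A\<^esub>}" using one_H by blast
      then have "generate ?A {} = H" using group.generate_empty[OF Ag] by simp
      then have "subgroup_rank ?A H \<le> card {}" using rank_le[of "{}" H ?A] by simp
      then show False using rk r1 by simp
    qed
    then obtain w c where "w \<in> carrier ?F" "Psi p g w \<in> H" "c < 2*g" "\<not> int p dvd es w c" by blast
    then show ?thesis using that by blast
  qed
  have e1c: "\<And>t. \<exists>a. (a * es w1 c) mod int p = t mod int p" using solve1[OF pr c(2)] by blast
  show ?thesis
  proof (cases "r = 1")
    case True
    let ?f = "fA c (2*g)"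
    have fr: "\<forall>k. reduced (?f k)" by (simp add: fA_reduced)
    have fc: "\<forall>k<2*g. ?f k \<in> carrier (F r)" using fA_carrier[where r=r and d="2*g" and g=g and c=c] True c(1) by simp
    have "c div 2 \<noteq> (2*g) div 2" using c(1) by presburger
    then have frel: "subst ?f (surface_relator g) = []" by (rule relator_fA)
    have gens: "\<forall>k<r. \<exists>j<2*g. ?f j = gen k"
    proof (intro allI impI)
      fix k assume "k < r"
      then have "k = 0" using True by simp
      then show "\<exists>j<2*g. ?f j = gen k" using c(1) by (intro exI[of _ c]) (simp add: fA_def)
    qed
    have E: "es (subst ?f w1) 0 = es w1 c"
      using es_subst_carrier[OF w1(1)] sumA0[OF c(1), of "2*g"] c(1) by simp
    have cov: "\<forall>t::nat \<Rightarrow> int. \<exists>w\<in>carrier ?F. Psi p g w \<in> H \<and> (\<forall>k<r. es (subst ?f w) k mod int p = t k mod int p)"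
    proof (rule cover_lemma[OF fr fc Hs w1 w1])
      show "\<forall>t::nat\<Rightarrow>int. \<exists>a b. \<forall>k<r. (a * es (subst ?f w1) k + b * es (subst ?f w1) k) mod int p = t k mod int p"
      proof
        fix t :: "nat \<Rightarrow> int"
        obtain a where "(a * es w1 c) mod int p = t 0 mod int p" using e1c by blast
        then show "\<exists>a b. \<forall>k<r. (a * es (subst ?f w1) k + b * es (subst ?f w1) k) mod int p = t k mod int p"
          using True E by (intro exI[of _ a] exI[of _ 0]) auto
      qed
    qed
    show ?thesis by (rule final[OF fr fc frel gens cov])
  next
    case False
    then have r2: "r = 2" using assms(3) by auto
    obtain u1 u2 j k where u1: "u1 \<in> carrier ?F" "Psi p g u1 \<in> H" and u2: "u2 \<in> carrier ?F" "Psi p g u2 \<in> H"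
      and mn: "\<not> int p dvd (es u1 j * es u2 k - es u1 k * es u2 j)"
    proof -
      have "\<exists>u1\<in>carrier ?F. Psi p g u1 \<in> H \<and> (\<exists>u2\<in>carrier ?F. Psi p g u2 \<in> H \<and>
              (\<exists>j k. \<not> int p dvd (es u1 j * es u2 k - es u1 k * es u2 j)))"
      proof (rule ccontr)
        assume nc: "\<not> ?thesis"
        have allm: "\<And>u. u \<in> carrier ?F \<Longrightarrow> Psi p g u \<in> H \<Longrightarrow> int p dvd (es w1 c * es u k - es w1 k * es u c)" for k
          using nc w1 by blast
        obtain iv where iv: "int p dvd (iv * es w1 c - 1)" using inverse_mod[OF pr c(2)] by blast
        interpret A: group ?A by (rule Ag)
        interpret FF: group ?F by (rule F_group)
        have hP: "group_hom ?F ?A (Psi p g)"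
          by (rule group_hom.intro[OF F_group A_group group_hom_axioms.intro[OF Psi_hom]])
        have Hsub: "H \<subseteq> generate ?A {Psi p g w1}"
        proof
          fix h assume h: "h \<in> H"
          then obtain u where u: "u \<in> carrier ?F" "h = Psi p g u" using Hrep by blast
          define lam where "lam = es u c * iv"
          let ?v = "u \<otimes>\<^bsub>?F\<^esub> inv\<^bsub>?F\<^esub> (w1 [^]\<^bsub>?F\<^esub> lam)"
          have vc: "?v \<in> carrier ?F" using u w1 by simp
          have "int p dvd es ?v k" if "k < 2*g" for k
          proof -
            have eq: "es w1 c * (es u k - lam * es w1 k)
                = (es w1 c * es u k - es w1 k * es u c) - es u c * es w1 k * (iv * es w1 c - 1)"
              by (simp add: lam_def algebra_simps)
            have "int p dvd es w1 c * (es u k - lam * es w1 k)"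
              unfolding eq using allm[OF u(1)] u h iv by (simp add: dvd_diff dvd_mult)
            then have "int p dvd (es u k - lam * es w1 k)" using int_prime_dvd_mult[OF pr _ c(2)] by blast
            then show ?thesis using u w1 by simp
          qed
          then have "Psi p g ?v = \<one>\<^bsub>?A\<^esub>" using Psi_one[OF vc] by blast
          then have "Psi p g u \<otimes>\<^bsub>?A\<^esub> inv\<^bsub>?A\<^esub> (Psi p g w1 [^]\<^bsub>?A\<^esub> lam) = \<one>\<^bsub>?A\<^esub>"
            using u w1 group_hom.hom_mult[OF hP] group_hom.hom_inv[OF hP] group_hom.hom_int_pow[OF hP] by simp
          then have "Psi p g u = Psi p g w1 [^]\<^bsub>?A\<^esub> lam"
            using u w1 hom_in_carrier[OF Psi_hom] by (metis A.int_pow_closed A.inv_closed A.inv_equality A.inv_inv)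
          then show "h \<in> generate ?A {Psi p g w1}"
            using u A.generate_pow[OF hom_in_carrier[OF Psi_hom w1(1)]] by blast
        qed
        have "generate ?A {Psi p g w1} \<subseteq> H"
          using A.generate_subgroup_incl[OF _ Hs] w1 by blast
        then have "generate ?A {Psi p g w1} = H" using Hsub by blast
        then have "subgroup_rank ?A H \<le> card {Psi p g w1}" using rank_le[of "{Psi p g w1}" H ?A] w1 by simp
        then show False using rk r2 by simp
      qed
      then show ?thesis using that by blast
    qed
    have jk: "j < 2*g" "k < 2*g"
    proof -
      show "j < 2*g"
      proof (rule ccontr)
        assume "\<not> j < 2*g"
        then have "es u1 j = 0" "es u2 j = 0" using es_high_carrier u1 u2 by auto
        then show False using mn by simp
      qed
      show "k < 2*g"
      proof (rule ccontr)
        assume "\<not> k < 2*g"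
        then have "es u1 k = 0" "es u2 k = 0" using es_high_carrier u1 u2 by auto
        then show False using mn by simp
      qed
    qed
    let ?m = "\<lambda>a b. es u1 a * es u2 b - es u1 b * es u2 a"
    let ?E = "\<lambda>f u kk. es (subst f u) kk"
    have fin2: "\<And>f. \<forall>k. reduced (f k) \<Longrightarrow> \<forall>k<2*g. f k \<in> carrier (F r) \<Longrightarrow> subst f (surface_relator g) = []
       \<Longrightarrow> \<forall>k<r. \<exists>j<2*g. f j = gen k
       \<Longrightarrow> \<not> int p dvd (?E f u1 0 * ?E f u2 1 - ?E f u1 1 * ?E f u2 0) \<Longrightarrow> ?T"
    proof -
      fix f
      assume fr: "\<forall>k. reduced (f k)" and fc: "\<forall>k<2*g. f k \<in> carrier (F r)"
        and frel: "subst f (surface_relator g) = []" and gens: "\<forall>k<r. \<exists>j<2*g. f j = gen k"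
        and det: "\<not> int p dvd (?E f u1 0 * ?E f u2 1 - ?E f u1 1 * ?E f u2 0)"
      have cov: "\<forall>t::nat \<Rightarrow> int. \<exists>w\<in>carrier ?F. Psi p g w \<in> H \<and> (\<forall>k<r. es (subst f w) k mod int p = t k mod int p)"
      proof (rule cover_lemma[OF fr fc Hs u1 u2])
        show "\<forall>t::nat\<Rightarrow>int. \<exists>a b. \<forall>k<r. (a * es (subst f u1) k + b * es (subst f u2) k) mod int p = t k mod int p"
        proof
          fix t :: "nat \<Rightarrow> int"
          obtain a b where ab: "(a * ?E f u1 0 + b * ?E f u2 0) mod int p = t 0 mod int p"
              "(a * ?E f u1 1 + b * ?E f u2 1) mod int p = t 1 mod int p"
            using solve2[OF pr det] by blast
          have "\<forall>k<r. (a * es (subst f u1) k + b * es (subst f u2) k) mod int p = t k mod int p"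
          proof (intro allI impI)
            fix k assume "k < r"
            then have "k = 0 \<or> k = 1" using r2 by auto
            then show "(a * es (subst f u1) k + b * es (subst f u2) k) mod int p = t k mod int p"
              using ab by auto
          qed
          then show "\<exists>a b. \<forall>k<r. (a * es (subst f u1) k + b * es (subst f u2) k) mod int p = t k mod int p"
            by blast
        qed
      qed
      show ?T by (rule final[OF fr fc frel gens cov])
    qed
    show ?thesis
    proof (cases "\<exists>a b. a < 2*g \<and> b < 2*g \<and> a div 2 \<noteq> b div 2 \<and> \<not> int p dvd ?m a b")
      case True
      then obtain a b where ab: "a < 2*g" "b < 2*g" "a div 2 \<noteq> b div 2" "\<not> int p dvd ?m a b" by blast
      have neq: "a \<noteq> b" using ab(3) by auto
      let ?f = "fA a b"
      have fr: "\<forall>k. reduced (?f k)" by (simp add: fA_reduced)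
      have fc: "\<forall>k<2*g. ?f k \<in> carrier (F r)" using fA_carrier[where r=r and d=b and g=g and c=a] r2 neq by simp
      have frel: "subst ?f (surface_relator g) = []" by (rule relator_fA[OF ab(3)])
      have gens: "\<forall>k<r. \<exists>j<2*g. ?f j = gen k"
      proof (intro allI impI)
        fix k assume "k < r"
        then have "k = 0 \<or> k = 1" using r2 by auto
        then show "\<exists>j<2*g. ?f j = gen k" using ab(1,2) neq by (auto simp: fA_def)
      qed
      have E: "?E ?f u1 0 = es u1 a" "?E ?f u2 0 = es u2 a" "?E ?f u1 1 = es u1 b" "?E ?f u2 1 = es u2 b"
        using es_subst_carrier[OF u1(1)] es_subst_carrier[OF u2(1)]
          sumA0[OF ab(1) neq] sumA1[OF ab(2) neq] by simp_all
      show ?thesis by (rule fin2[OF fr fc frel gens]) (use E ab(4) in simp)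
    next
      case False
      then have cross: "\<And>a b. a < 2*g \<Longrightarrow> b < 2*g \<Longrightarrow> a div 2 \<noteq> b div 2 \<Longrightarrow> int p dvd ?m a b" by blast
      have same: "j div 2 = k div 2" using cross[OF jk] mn by blast
      define i where "i = j div 2"
      have jk': "(j = 2*i \<and> k = 2*i+1) \<or> (j = 2*i+1 \<and> k = 2*i)"
      proof -
        have "j \<noteq> k" using mn by auto
        then show ?thesis using same unfolding i_def by presburger
      qed
      have ig: "i < g" using jk(1) unfolding i_def by presburger
      define i' where "i' = (if i = 0 then 1 else (0::nat))"
      have i'g: "i' < g" using assms(2) by (simp add: i'_def)
      have ii: "i \<noteq> i'" by (simp add: i'_def)
      have D': "\<not> int p dvd ?m (2*i) (2*i+1)"
      proof
        assume "int p dvd ?m (2*i) (2*i+1)"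
        moreover have "?m j k = ?m (2*i) (2*i+1) \<or> ?m j k = - ?m (2*i) (2*i+1)"
          using jk' by (auto simp: algebra_simps)
        ultimately show False using mn by (metis dvd_minus_iff)
      qed
      have van: "int p dvd es u1 cc \<and> int p dvd es u2 cc" if cc: "cc < 2*g" "cc div 2 \<noteq> i" for cc
      proof -
        have m1: "int p dvd ?m cc k" "int p dvd ?m cc j" "int p dvd ?m j cc" "int p dvd ?m k cc"
          using cross cc jk same unfolding i_def by auto
        have "es u1 cc * ?m j k = es u1 j * ?m cc k - es u1 k * ?m cc j"
          by (simp add: algebra_simps)
        then have a1: "int p dvd ?m j k * es u1 cc" using m1 by (simp add: dvd_diff dvd_mult mult.commute)
        have "es u2 cc * ?m j k = es u2 k * ?m j cc - es u2 j * ?m k cc"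
          by (simp add: algebra_simps)
        then have a2: "int p dvd ?m j k * es u2 cc" using m1 by (simp add: dvd_diff dvd_mult mult.commute)
        show ?thesis using int_prime_dvd_mult[OF pr a1 mn] int_prime_dvd_mult[OF pr a2 mn] by blast
      qed
      let ?f = "fB i i'"
      have fr: "\<forall>k. reduced (?f k)" by (simp add: fB_reduced)
      have fc: "\<forall>k<2*g. ?f k \<in> carrier (F r)" using fB_carrier r2 by simp
      have frel: "subst ?f (surface_relator g) = []" by (rule relator_fB[OF ii ig i'g])
      have gens: "\<forall>k<r. \<exists>j<2*g. ?f j = gen k"
      proof (intro allI impI)
        fix k assume "k < r"
        then have "k = 0 \<or> k = 1" using r2 by auto
        moreover have "?f (2*i) = gen 0" "?f (2*i+1) = gen 1" by (simp_all add: fB_def)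
        moreover have "2*i < 2*g" "2*i+1 < 2*g" using ig by auto
        ultimately show "\<exists>j<2*g. ?f j = gen k" by blast
      qed
      have b1: "2*i+1 < 2*g" "2*i'+1 < 2*g" using ig i'g by auto
      have E: "?E ?f u1 0 = es u1 (2*i) + es u1 (2*i'+1)" "?E ?f u2 0 = es u2 (2*i) + es u2 (2*i'+1)"
              "?E ?f u1 1 = es u1 (2*i+1) + es u1 (2*i')" "?E ?f u2 1 = es u2 (2*i+1) + es u2 (2*i')"
        using es_subst_carrier[OF u1(1)] es_subst_carrier[OF u2(1)]
          sumB0[OF ii b1] sumB1[OF ii b1] by simp_all
      have v1: "int p dvd es u1 (2*i'+1)" "int p dvd es u2 (2*i'+1)"
        using van[of "2*i'+1"] b1 ii by auto
      have v2: "int p dvd es u1 (2*i')" "int p dvd es u2 (2*i')"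
        using van[of "2*i'"] b1 ii by auto
      obtain x1 x2 y1 y2 where xy: "es u1 (2*i'+1) = int p * x1" "es u2 (2*i'+1) = int p * x2"
        "es u1 (2*i') = int p * y1" "es u2 (2*i') = int p * y2"
        using v1 v2 by (meson dvdE)
      have det: "\<not> int p dvd (?E ?f u1 0 * ?E ?f u2 1 - ?E ?f u1 1 * ?E ?f u2 0)"
      proof
        assume d: "int p dvd (?E ?f u1 0 * ?E ?f u2 1 - ?E ?f u1 1 * ?E ?f u2 0)"
        let ?a1 = "es u1 (2*i)" and ?a2 = "es u2 (2*i)" and ?b1 = "es u1 (2*i+1)" and ?b2 = "es u2 (2*i+1)"
        have "?E ?f u1 0 * ?E ?f u2 1 - ?E ?f u1 1 * ?E ?f u2 0 - ?m (2*i) (2*i+1)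
              = int p * (?a1 * y2 + x1 * ?b2 + x1 * int p * y2 - ?b1 * x2 - y1 * ?a2 - y1 * int p * x2)"
          unfolding E xy by (simp add: algebra_simps)
        then have "int p dvd (?E ?f u1 0 * ?E ?f u2 1 - ?E ?f u1 1 * ?E ?f u2 0 - ?m (2*i) (2*i+1))"
          by (metis dvdI)
        from dvd_diff[OF d this] have "int p dvd ?m (2*i) (2*i+1)" by simp
        then show False using D' by blast
      qed
      show ?thesis by (rule fin2[OF fr fc frel gens det])
    qed
  qed
qed

end
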